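(* Consider a sequence of total systems indexed by the size $N$ (the system S is fixed and the bath grows). For each $N$, the total Hamiltonian $H=H^{(N)}$ on $\mathcal{H}_{\mathrm{S}}\otimes\mathcal{H}_{\mathrm{B}}^{(N)}$ (finite-dimensional) has non-degenerate spectrum with eigenpairs $(E_j,|E_j\rangle)$, and the initial state is a product $\rho_{\mathrm{S}}(0)\otimes\rho_{\mathrm{B}}(0)$ (depending on $N$). Fix an energy density $u$ and widths $\Delta=\Delta_N>0$ with $\Delta_N=\mathcal{O}(N^\alpha)$ for some $0\le\alpha<1$, and let $M_{uN,\Delta}:=\{j:|E_j-uN|\le\Delta\}$ (assumed nonempty) and $\rho^{\mathrm{mc}}:=\frac{1}{|M_{uN,\Delta}|}\sum_{j\in M_{uN,\Delta}}|E_j\rangle\langle E_j|$. Assume: (i) (strong ETH) for every $\epsilon>0$, for all sufficiently large $N$, $\mathcal{D}_{\mathrm{S}}(|E_j\rangle\langle E_j|,\rho^{\mathrm{mc}})<\epsilon$ for every $j\in M_{uN,\Delta}$; (ii) (initial energy distribution) with $P_{\mathrm{out}}:=\sum_{j\notin M_{uN,\Delta}}|E_j\rangle\langle E_j|$, for every $\epsilon>0$, $\mathrm{Tr}[P_{\mathrm{out}}\,\rho_{\mathrm{S}}(0)\otimes\rho_{\mathrm{B}}(0)]<\epsilon$ for all sufficiently large $N$. Then for every $\epsilon>0$, $\mathcal{D}_{\mathrm{S}}(\omega,\rho^{\mathrm{mc}})<\epsilon$ for all sufficiently large $N$, where $\omega$ is the diagonal ensemble of $\rho_{\mathrm{S}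}(0)\otimes\rho_{\mathrm{B}}(0)$.
   Context: The diagonal ensemble of an initial state $\rho(0)$ is $\omega:=\lim_{\tau\to\infty}\frac1\tau\int_0^\tau e^{-iHt}\rho(0)e^{iHt}\,dt$; for non-degenerate $H$ this equals $\sum_j|E_j\rangle\langle E_j|\rho(0)|E_j\rangle\langle E_j|$. For density operators $\rho,\tau$ on $\mathcal{H}_{\mathrm{S}}\otimes\mathcal{H}_{\mathrm{B}}$, the local trace distance is $\mathcal{D}_{\mathrm{S}}(\rho,\tau):=\frac12\mathrm{Tr}\bigl|\mathrm{Tr}_{\mathrm{B}}\rho-\mathrm{Tr}_{\mathrm{B}}\tau\bigr|$. *)

theory Defs
  imports "Jordan_Normal_Form.Matrix" "HOL-Library.Landau_Symbols"
begin

(* Composite space H_S (x) H_B of dimension dS * dB; composite basis index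
   of (a,b) (a < dS system index, b < dB bath index) is a * dB + b. *)

definition mtrace :: "complex mat \<Rightarrow> complex" where
  "mtrace A = (\<Sum>i<dim_row A. A $$ (i, i))"

definition dagger :: "complex mat \<Rightarrow> complex mat" where
  "dagger A = mat (dim_col A) (dim_row A) (\<lambda>(i, j). cnj (A $$ (j, i)))"

definition hermitian :: "complex mat \<Rightarrow> bool" where
  "hermitian A \<longleftrightarrow> dim_row A = dim_col A \<and> dagger A = A"

definition braket :: "complex vec \<Rightarrow> complex vec \<Rightarrow> complex" where
  "braket v w = (\<Sum>i<dim_vec v. cnj (v $ i) * w $ i)"

definition psd :: "complex mat \<Rightarrow> bool" where
  "psd A \<longleftrightarrow> hermitian A \<and>
     (\<forall>v \<in> carrier_vec (dim_row A). Re (braket v (A *\<^sub>v v)) \<ge> 0)"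

definition density_op :: "nat \<Rightarrow> complex mat \<Rightarrow> bool" where
  "density_op n \<rho> \<longleftrightarrow> \<rho> \<in> carrier_mat n n \<and> psd \<rho> \<and> mtrace \<rho> = 1"

definition mat_abs :: "complex mat \<Rightarrow> complex mat" where
  "mat_abs A = (THE B. psd B \<and> B * B = dagger A * A)"

definition trace_norm :: "complex mat \<Rightarrow> real" where
  "trace_norm A = Re (mtrace (mat_abs A))"

definition kron :: "complex mat \<Rightarrow> complex mat \<Rightarrow> complex mat" where
  "kron A B = mat (dim_row A * dim_row B) (dim_col A * dim_col B)
     (\<lambda>(i, j). A $$ (i div dim_row B, j div dim_col B) * B $$ (i mod dim_row B, j mod dim_col B))"

definition ptrace_B :: "nat \<Rightarrow> complex mat \<Rightarrow> complex mat" where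
  "ptrace_B dB \<rho> = mat (dim_row \<rho> div dB) (dim_col \<rho> div dB)
     (\<lambda>(a, a'). \<Sum>b<dB. \<rho> $$ (a * dB + b, a' * dB + b))"

definition local_trace_dist :: "nat \<Rightarrow> complex mat \<Rightarrow> complex mat \<Rightarrow> real" where
  "local_trace_dist dB \<rho> \<tau> = trace_norm (ptrace_B dB \<rho> - ptrace_B dB \<tau>) / 2"

definition ketbra :: "complex vec \<Rightarrow> complex mat" where
  "ketbra v = mat (dim_vec v) (dim_vec v) (\<lambda>(i, j). v $ i * cnj (v $ j))"

definition wsum_proj :: "nat \<Rightarrow> (nat \<Rightarrow> complex) \<Rightarrow> (nat \<Rightarrow> complex vec) \<Rightarrow> nat set \<Rightarrow> complex mat" where
  "wsum_proj n c v S = mat n n (\<lambda>(a, b). \<Sum>j\<in>S. c j * (v j $ a * cnj (v j $ b)))"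

(* diagonal ensemble of rho for a non-degenerate Hamiltonian with orthonormal
   eigenbasis v_0..v_{n-1}:  sum_j |E_j><E_j| rho |E_j><E_j| *)
definition diag_ensemble :: "nat \<Rightarrow> (nat \<Rightarrow> complex vec) \<Rightarrow> complex mat \<Rightarrow> complex mat" where
  "diag_ensemble n v \<rho> = wsum_proj n (\<lambda>j. braket (v j) (\<rho> *\<^sub>v v j)) v {..<n}"

definition shell :: "nat \<Rightarrow> (nat \<Rightarrow> real) \<Rightarrow> real \<Rightarrow> real \<Rightarrow> nat set" where
  "shell n E e \<Delta> = {j. j < n \<and> \<bar>E j - e\<bar> \<le> \<Delta>}"

definition rho_mc :: "nat \<Rightarrow> (nat \<Rightarrow> complex vec) \<Rightarrow> nat set \<Rightarrow> complex mat" where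
  "rho_mc n v M = wsum_proj n (\<lambda>_. 1 / of_nat (card M)) v M"

end

theory Submission
  imports Defs "Jordan_Normal_Form.Spectral_Radius" "Jordan_Normal_Form.Schur_Decomposition"
begin


definition orthonormal :: "nat \<Rightarrow> (nat \<Rightarrow> complex vec) \<Rightarrow> bool" where
 "orthonormal n u \<longleftrightarrow> (\<forall>k<n. u k \<in> carrier_vec n) \<and>
    (\<forall>j<n. \<forall>k<n. braket (u j) (u k) = (if j = k then 1 else 0))"

definition gproj :: "nat \<Rightarrow> ('i \<Rightarrow> complex) \<Rightarrow> ('i \<Rightarrow> complex vec) \<Rightarrow> 'i set \<Rightarrow> complex mat" where
 "gproj n c x S = mat n n (\<lambda>(a,b). \<Sum>k\<in>S. c k * (x k $ a * cnj (x k $ b)))"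

lemma wsum_proj_gproj: "wsum_proj = gproj"
  by (auto simp: fun_eq_iff wsum_proj_def gproj_def)

lemma braket_cnj: "dim_vec x = dim_vec y \<Longrightarrow> cnj (braket x y) = braket y x"
  unfolding braket_def by (simp add: mult.commute)

lemma orthonormalD:
  "orthonormal n u \<Longrightarrow> k < n \<Longrightarrow> u k \<in> carrier_vec n"
  "orthonormal n u \<Longrightarrow> j < n \<Longrightarrow> k < n \<Longrightarrow> braket (u j) (u k) = (if j = k then 1 else 0)"
  unfolding orthonormal_def by auto

lemma complete:
  assumes on: "orthonormal n u" and ab: "a < n" "b < n"
  shows "(\<Sum>k<n. u k $ a * cnj (u k $ b)) = (if a = b then 1 else 0)"
proof -
  define U where "U = mat n n (\<lambda>(a,k). u k $ a)"
  define V where "V = mat n n (\<lambda>(k,a). cnj (u k $ a))"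
  have U: "U \<in> carrier_mat n n" and V: "V \<in> carrier_mat n n" by (auto simp: U_def V_def)
  have "V * U = 1\<^sub>m n"
  proof (rule eq_matI)
    fix i j assume ij: "i < dim_row (1\<^sub>m n)" "j < dim_col (1\<^sub>m n)"
    have "(V * U) $$ (i, j) = (\<Sum>a<n. cnj (u i $ a) * u j $ a)"
      using ij by (auto simp: U_def V_def scalar_prod_def atLeast0LessThan row_def col_def)
    also have "\<dots> = braket (u i) (u j)"
      using ij orthonormalD(1)[OF on, of i] by (auto simp: braket_def)
    finally show "(V * U) $$ (i, j) = 1\<^sub>m n $$ (i, j)"
      using ij orthonormalD(2)[OF on, of i j] by auto
  qed (auto simp: U_def V_def)
  hence "U * V = 1\<^sub>m n" using mat_mult_left_right_inverse[OF V U] by auto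
  hence "(U * V) $$ (a, b) = (if a = b then 1 else 0)" using ab by auto
  moreover have "(U * V) $$ (a, b) = (\<Sum>k<n. u k $ a * cnj (u k $ b))"
    using ab by (auto simp: U_def V_def scalar_prod_def atLeast0LessThan row_def col_def)
  ultimately show ?thesis by simp
qed

lemma expansion:
  assumes on: "orthonormal n u" and x: "x \<in> carrier_vec n" and a: "a < n"
  shows "(\<Sum>k<n. braket (u k) x * u k $ a) = x $ a"
proof -
  have "(\<Sum>k<n. braket (u k) x * u k $ a) = (\<Sum>k<n. \<Sum>b<n. x $ b * (u k $ a * cnj (u k $ b)))"
    using on x by (auto simp: braket_def sum_distrib_right orthonormal_def intro!: sum.cong)
  also have "\<dots> = (\<Sum>b<n. x $ b * (\<Sum>k<n. u k $ a * cnj (u k $ b)))"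
    by (subst sum.swap) (simp add: sum_distrib_left)
  also have "\<dots> = (\<Sum>b<n. x $ b * (if a = b then 1 else 0))"
    using complete[OF on a] by auto
  also have "\<dots> = x $ a" using a by (simp add: if_distrib cong: if_cong)
  finally show ?thesis .
qed

lemma parseval:
  assumes on: "orthonormal n u" and x: "x \<in> carrier_vec n" and y: "y \<in> carrier_vec n"
  shows "(\<Sum>k<n. cnj (braket (u k) x) * braket (u k) y) = braket x y"
proof -
  have "(\<Sum>k<n. cnj (braket (u k) x) * braket (u k) y)
      = (\<Sum>k<n. \<Sum>b<n. \<Sum>a<n. cnj (x $ a) * y $ b * (u k $ a * cnj (u k $ b)))"
    using on x y by (auto simp: braket_def sum_distrib_right sum_distrib_left orthonormal_def
       intro!: sum.cong)
  also have "\<dots> = (\<Sum>b<n. \<Sum>a<n. cnj (x $ a) * y $ b * (\<Sum>k<n. u k $ a * cnj (u k $ b)))"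
  proof -
    have "(\<Sum>k<n. \<Sum>b<n. \<Sum>a<n. cnj (x $ a) * y $ b * (u k $ a * cnj (u k $ b)))
       = (\<Sum>b<n. \<Sum>k<n. \<Sum>a<n. cnj (x $ a) * y $ b * (u k $ a * cnj (u k $ b)))"
      by (rule sum.swap)
    also have "\<dots> = (\<Sum>b<n. \<Sum>a<n. \<Sum>k<n. cnj (x $ a) * y $ b * (u k $ a * cnj (u k $ b)))"
      by (rule sum.cong[OF refl], rule sum.swap)
    finally show ?thesis by (simp add: sum_distrib_left)
  qed
  also have "\<dots> = (\<Sum>b<n. \<Sum>a<n. cnj (x $ a) * y $ b * (if a = b then 1 else 0))"
    using complete[OF on] by auto
  also have "\<dots> = braket x y" using x by (simp add: braket_def if_distrib cong: if_cong)
  finally show ?thesis .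
qed



lemma hermitianD:
  assumes "hermitian A" "A \<in> carrier_mat n n" "i < n" "j < n"
  shows "A $$ (j, i) = cnj (A $$ (i, j))"
proof -
  have "dagger A $$ (i, j) = A $$ (i, j)" using assms unfolding hermitian_def by simp
  hence "cnj (A $$ (j, i)) = A $$ (i, j)" using assms by (auto simp: dagger_def)
  thus ?thesis by (metis complex_cnj_cnj)
qed

lemma hermitianI:
  assumes "A \<in> carrier_mat n n" "\<And>i j. i < n \<Longrightarrow> j < n \<Longrightarrow> A $$ (j, i) = cnj (A $$ (i, j))"
  shows "hermitian A"
proof -
  have "dagger A = A"
  proof (rule eq_matI)
    fix i j assume "i < dim_row A" "j < dim_col A"
    thus "dagger A $$ (i, j) = A $$ (i, j)" using assms(1) assms(2)[of j i] by (auto simp: dagger_def)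
  qed (use assms in \<open>auto simp: dagger_def\<close>)
  thus ?thesis using assms unfolding hermitian_def by auto
qed

lemma braket_mult_vec: "A \<in> carrier_mat n n \<Longrightarrow> y \<in> carrier_vec n \<Longrightarrow> x \<in> carrier_vec n \<Longrightarrow>
  braket x (A *\<^sub>v y) = (\<Sum>i<n. \<Sum>j<n. cnj (x $ i) * A $$ (i, j) * y $ j)"
  by (auto simp: braket_def scalar_prod_def atLeast0LessThan row_def sum_distrib_left mult.assoc)

lemma hermitian_braket:
  assumes h: "hermitian A" and A: "A \<in> carrier_mat n n" and x: "x \<in> carrier_vec n" and y: "y \<in> carrier_vec n"
  shows "braket x (A *\<^sub>v y) = braket (A *\<^sub>v x) y"
proof -
  have "braket (A *\<^sub>v x) y = (\<Sum>j<n. cnj (\<Sum>i<n. A $$ (j, i) * x $ i) * y $ j)"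
    using A x y by (auto simp: braket_def scalar_prod_def atLeast0LessThan row_def)
  also have "\<dots> = (\<Sum>j<n. \<Sum>i<n. cnj (x $ i) * A $$ (i, j) * y $ j)"
  proof (rule sum.cong[OF refl])
    fix j assume j: "j \<in> {..<n}"
    have "cnj (\<Sum>i<n. A $$ (j, i) * x $ i) * y $ j = (\<Sum>i<n. cnj (A $$ (j, i)) * cnj (x $ i) * y $ j)"
      by (simp add: sum_distrib_right)
    also have "\<dots> = (\<Sum>i<n. cnj (x $ i) * A $$ (i, j) * y $ j)"
    proof (rule sum.cong[OF refl])
      fix i assume i: "i \<in> {..<n}"
      have "A $$ (j, i) = cnj (A $$ (i, j))" using hermitianD[OF h A, of i j] i j by simp
      thus "cnj (A $$ (j, i)) * cnj (x $ i) * y $ j = cnj (x $ i) * A $$ (i, j) * y $ j" by simp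
    qed
    finally show "cnj (\<Sum>i<n. A $$ (j, i) * x $ i) * y $ j = (\<Sum>i<n. cnj (x $ i) * A $$ (i, j) * y $ j)" .
  qed
  also have "\<dots> = (\<Sum>i<n. \<Sum>j<n. cnj (x $ i) * A $$ (i, j) * y $ j)" by (rule sum.swap)
  finally show ?thesis using braket_mult_vec[OF A y x] by simp
qed

lemma hermitian_quad_real:
  assumes h: "hermitian A" and A: "A \<in> carrier_mat n n" and x: "x \<in> carrier_vec n"
  shows "braket x (A *\<^sub>v x) = of_real (Re (braket x (A *\<^sub>v x)))"
proof -
  have "cnj (braket x (A *\<^sub>v x)) = braket (A *\<^sub>v x) x" using A x by (intro braket_cnj) auto
  also have "\<dots> = braket x (A *\<^sub>v x)" using hermitian_braket[OF h A x x] by simp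
  finally have c: "cnj (braket x (A *\<^sub>v x)) = braket x (A *\<^sub>v x)" .
  have "Im (braket x (A *\<^sub>v x)) = 0" using arg_cong[OF c, of Im] by simp
  thus ?thesis by (simp add: complex_eq_iff)
qed

lemma gproj_carrier[simp]: "gproj n c x S \<in> carrier_mat n n"
  "dim_row (gproj n c x S) = n" "dim_col (gproj n c x S) = n"
  by (auto simp: gproj_def)

lemma gproj_index: "a < n \<Longrightarrow> b < n \<Longrightarrow> gproj n c x S $$ (a, b) = (\<Sum>k\<in>S. c k * (x k $ a * cnj (x k $ b)))"
  by (simp add: gproj_def)

lemma gproj_mult_vec:
  assumes x: "x ` S \<subseteq> carrier_vec n" and w: "w \<in> carrier_vec n"
  shows "gproj n c x S *\<^sub>v w = vec n (\<lambda>a. \<Sum>k\<in>S. c k * braket (x k) w * x k $ a)"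
proof (rule eq_vecI)
  fix a assume "a < dim_vec (vec n (\<lambda>a. \<Sum>k\<in>S. c k * braket (x k) w * x k $ a))"
  hence a: "a < n" by simp
  have "(gproj n c x S *\<^sub>v w) $ a = (\<Sum>b<n. (\<Sum>k\<in>S. c k * (x k $ a * cnj (x k $ b))) * w $ b)"
    using a w by (auto simp: gproj_def scalar_prod_def atLeast0LessThan row_def)
  also have "\<dots> = (\<Sum>k\<in>S. \<Sum>b<n. c k * (x k $ a * cnj (x k $ b)) * w $ b)"
    by (simp add: sum_distrib_right) (rule sum.swap)
  also have "\<dots> = (\<Sum>k\<in>S. c k * braket (x k) w * x k $ a)"
  proof (rule sum.cong[OF refl])
    fix k assume k: "k \<in> S"
    hence "dim_vec (x k) = n" using x by auto
    thus "(\<Sum>b<n. c k * (x k $ a * cnj (x k $ b)) * w $ b) = c k * braket (x k) w * x k $ a"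
      by (auto simp: braket_def sum_distrib_left sum_distrib_right mult_ac intro!: sum.cong)
  qed
  finally show "(gproj n c x S *\<^sub>v w) $ a = vec n (\<lambda>a. \<Sum>k\<in>S. c k * braket (x k) w * x k $ a) $ a"
    using a by simp
qed simp

lemma braket_vec_sum:
  assumes y: "y \<in> carrier_vec n"
  shows "braket y (vec n (\<lambda>a. \<Sum>k\<in>S. f k * z k $ a)) = (\<Sum>k\<in>S. f k * braket y (z k))"
proof -
  have "braket y (vec n (\<lambda>a. \<Sum>k\<in>S. f k * z k $ a)) = (\<Sum>a<n. \<Sum>k\<in>S. cnj (y $ a) * (f k * z k $ a))"
    using y by (auto simp: braket_def sum_distrib_left)
  also have "\<dots> = (\<Sum>k\<in>S. \<Sum>a<n. cnj (y $ a) * (f k * z k $ a))" by (rule sum.swap)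
  also have "\<dots> = (\<Sum>k\<in>S. f k * braket y (z k))"
    using y by (auto simp: braket_def sum_distrib_left mult_ac intro!: sum.cong)
  finally show ?thesis .
qed

lemma gproj_braket:
  assumes x: "x ` S \<subseteq> carrier_vec n" and w: "w \<in> carrier_vec n" and y: "y \<in> carrier_vec n"
  shows "braket y (gproj n c x S *\<^sub>v w) = (\<Sum>k\<in>S. c k * (cnj (braket (x k) y) * braket (x k) w))"
proof -
  have "braket y (gproj n c x S *\<^sub>v w) = (\<Sum>k\<in>S. (c k * braket (x k) w) * braket y (x k))"
    unfolding gproj_mult_vec[OF x w] using braket_vec_sum[OF y, where S=S and f="\<lambda>k. c k * braket (x k) w" and z=x] by simp
  also have "\<dots> = (\<Sum>k\<in>S. c k * (cnj (braket (x k) y) * braket (x k) w))"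
    using x y by (auto simp: braket_cnj mult_ac carrier_vecD intro!: sum.cong)
  finally show ?thesis .
qed

lemma gproj_quad:
  assumes x: "x ` S \<subseteq> carrier_vec n" and w: "w \<in> carrier_vec n"
  shows "braket w (gproj n (\<lambda>k. of_real (r k)) x S *\<^sub>v w) = of_real (\<Sum>k\<in>S. r k * (cmod (braket (x k) w))^2)"
proof -
  have e: "cnj z * z = of_real ((cmod z)^2)" for z :: complex
    by (simp add: complex_norm_square[symmetric] mult.commute del: of_real_power)
  show ?thesis unfolding gproj_braket[OF x w w] e by simp
qed

lemma dagger_gproj: "dagger (gproj n c x S) = gproj n (\<lambda>k. cnj (c k)) x S"
  by (auto simp: dagger_def gproj_def mult_ac intro!: eq_matI)

lemma gproj_hermitian: "hermitian (gproj n (\<lambda>k. of_real (r k)) x S)"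
  unfolding hermitian_def dagger_gproj by simp

lemma gproj_psd:
  assumes x: "x ` S \<subseteq> carrier_vec n" and r: "\<And>k. k \<in> S \<Longrightarrow> r k \<ge> 0"
  shows "psd (gproj n (\<lambda>k. of_real (r k)) x S)"
proof -
  have "Re (braket v (gproj n (\<lambda>k. of_real (r k)) x S *\<^sub>v v)) \<ge> 0" if v: "v \<in> carrier_vec n" for v
    unfolding gproj_quad[OF x v] using r by (auto intro!: sum_nonneg)
  thus ?thesis unfolding psd_def using gproj_hermitian by auto
qed





lemma gproj_trace:
  assumes x: "x ` S \<subseteq> carrier_vec n"
  shows "mtrace (gproj n c x S) = (\<Sum>k\<in>S. c k * braket (x k) (x k))"
proof -
  have "mtrace (gproj n c x S) = (\<Sum>i<n. \<Sum>k\<in>S. c k * (x k $ i * cnj (x k $ i)))"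
    by (simp add: mtrace_def gproj_def)
  also have "\<dots> = (\<Sum>k\<in>S. \<Sum>i<n. c k * (x k $ i * cnj (x k $ i)))" by (rule sum.swap)
  also have "\<dots> = (\<Sum>k\<in>S. c k * braket (x k) (x k))"
  proof (rule sum.cong[OF refl])
    fix k assume "k \<in> S" hence "dim_vec (x k) = n" using x by auto
    thus "(\<Sum>i<n. c k * (x k $ i * cnj (x k $ i))) = c k * braket (x k) (x k)"
      by (simp add: braket_def sum_distrib_left mult_ac)
  qed
  finally show ?thesis .
qed

lemma sum_delta_in:
  assumes "finite S" "j \<in> S"
  shows "(\<Sum>k\<in>S. f k * (if k = j then 1 else 0)) = (f j :: complex)"
  using assms by (simp add: if_distrib sum.delta cong: if_cong)

lemma sum_delta_in':
  assumes "finite S" "j \<in> S"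
  shows "(\<Sum>k\<in>S. f k * (if j = k then 1 else 0)) = (f j :: complex)"
  using assms by (simp add: if_distrib sum.delta cong: if_cong)

lemma gproj_eig:
  assumes on: "orthonormal n u" and S: "S \<subseteq> {..<n}" and j: "j < n"
  shows "gproj n c u S *\<^sub>v u j = (if j \<in> S then c j else 0) \<cdot>\<^sub>v u j"
proof -
  have x: "u ` S \<subseteq> carrier_vec n" using S orthonormalD(1)[OF on] by auto
  have uj: "u j \<in> carrier_vec n" using orthonormalD(1)[OF on j] .
  have fin: "finite S" using S finite_subset by blast
  show ?thesis unfolding gproj_mult_vec[OF x uj]
  proof (rule eq_vecI)
    fix a assume "a < dim_vec ((if j \<in> S then c j else 0) \<cdot>\<^sub>v u j)"
    hence a: "a < n" using uj by simp
    have "(\<Sum>k\<in>S. c k * braket (u k) (u j) * u k $ a) = (\<Sum>k\<in>S. (c k * u k $ a) * (if k = j then 1 else 0))"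
      using orthonormalD(2)[OF on] S j by (auto intro!: sum.cong)
    also have "\<dots> = (if j \<in> S then c j * u j $ a else 0)"
      using fin by (simp add: if_distrib sum.delta cong: if_cong)
    finally show "vec n (\<lambda>a. \<Sum>k\<in>S. c k * braket (u k) (u j) * u k $ a) $ a = ((if j \<in> S then c j else 0) \<cdot>\<^sub>v u j) $ a"
      using a uj by simp
  qed (use uj in simp)
qed

lemma gproj_mult_orth:
  assumes on: "orthonormal n u" and S: "S \<subseteq> {..<n}"
  shows "gproj n c u S * gproj n d u S = gproj n (\<lambda>k. c k * d k) u S"
proof (rule eq_matI)
  have fin: "finite S" using S finite_subset by blast
  fix a b assume ab: "a < dim_row (gproj n (\<lambda>k. c k * d k) u S)" "b < dim_col (gproj n (\<lambda>k. c k * d k) u S)"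
  hence a: "a < n" and b: "b < n" by auto
  have "(gproj n c u S * gproj n d u S) $$ (a, b)
     = (\<Sum>m<n. (\<Sum>k\<in>S. c k * (u k $ a * cnj (u k $ m))) * (\<Sum>l\<in>S. d l * (u l $ m * cnj (u l $ b))))"
    using a b by (simp add: gproj_def scalar_prod_def atLeast0LessThan row_def col_def)
  also have "\<dots> = (\<Sum>m<n. \<Sum>k\<in>S. \<Sum>l\<in>S. (c k * d l * u k $ a * cnj (u l $ b)) * (cnj (u k $ m) * u l $ m))"
    by (simp add: sum_product mult_ac)
  also have "\<dots> = (\<Sum>k\<in>S. \<Sum>m<n. \<Sum>l\<in>S. (c k * d l * u k $ a * cnj (u l $ b)) * (cnj (u k $ m) * u l $ m))"
    by (rule sum.swap)
  also have "\<dots> = (\<Sum>k\<in>S. \<Sum>l\<in>S. \<Sum>m<n. (c k * d l * u k $ a * cnj (u l $ b)) * (cnj (u k $ m) * u l $ m))"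
    by (rule sum.cong[OF refl], rule sum.swap)
  also have "\<dots> = (\<Sum>k\<in>S. \<Sum>l\<in>S. (c k * d l * u k $ a * cnj (u l $ b)) * braket (u k) (u l))"
  proof (intro sum.cong refl)
    fix k l assume "k \<in> S" "l \<in> S"
    hence "dim_vec (u k) = n" using S orthonormalD(1)[OF on] by auto
    thus "(\<Sum>m<n. (c k * d l * u k $ a * cnj (u l $ b)) * (cnj (u k $ m) * u l $ m)) =
       (c k * d l * u k $ a * cnj (u l $ b)) * braket (u k) (u l)"
      by (simp add: braket_def sum_distrib_left)
  qed
  also have "\<dots> = (\<Sum>k\<in>S. \<Sum>l\<in>S. (c k * d l * u k $ a * cnj (u l $ b)) * (if k = l then 1 else 0))"
  proof (intro sum.cong refl)
    fix k l assume "k \<in> S" "l \<in> S"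
    hence "k < n" "l < n" using S by auto
    thus "(c k * d l * u k $ a * cnj (u l $ b)) * braket (u k) (u l) = (c k * d l * u k $ a * cnj (u l $ b)) * (if k = l then 1 else 0)"
      using orthonormalD(2)[OF on] by simp
  qed
  also have "\<dots> = (\<Sum>k\<in>S. c k * d k * u k $ a * cnj (u k $ b))"
  proof (rule sum.cong[OF refl])
    fix k assume k: "k \<in> S"
    show "(\<Sum>l\<in>S. (c k * d l * u k $ a * cnj (u l $ b)) * (if k = l then 1 else 0)) = c k * d k * u k $ a * cnj (u k $ b)"
      using sum_delta_in'[OF fin k, of "\<lambda>l. c k * d l * u k $ a * cnj (u l $ b)"] by simp
  qed
  also have "\<dots> = gproj n (\<lambda>k. c k * d k) u S $$ (a, b)"
    using a b by (simp add: gproj_def mult_ac)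
  finally show "(gproj n c u S * gproj n d u S) $$ (a, b) = gproj n (\<lambda>k. c k * d k) u S $$ (a, b)" .
qed auto

lemma spectral_rep:
  assumes on: "orthonormal n u" and A: "A \<in> carrier_mat n n"
    and ev: "\<And>k. k < n \<Longrightarrow> A *\<^sub>v u k = d k \<cdot>\<^sub>v u k"
  shows "A = gproj n d u {..<n}"
proof (rule eq_matI)
  fix a b assume "a < dim_row (gproj n d u {..<n})" "b < dim_col (gproj n d u {..<n})"
  hence a: "a < n" and b: "b < n" by auto
  have uk: "k < n \<Longrightarrow> dim_vec (u k) = n" for k using orthonormalD(1)[OF on] by auto
  have "A $$ (a, b) = (\<Sum>m<n. A $$ (a, m) * (if m = b then 1 else 0))"
    using b by (simp add: if_distrib sum.delta cong: if_cong)
  also have "\<dots> = (\<Sum>m<n. A $$ (a, m) * (\<Sum>k<n. u k $ m * cnj (u k $ b)))"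
    using complete[OF on _ b] by simp
  also have "\<dots> = (\<Sum>m<n. \<Sum>k<n. A $$ (a, m) * u k $ m * cnj (u k $ b))"
    by (simp add: sum_distrib_left mult_ac)
  also have "\<dots> = (\<Sum>k<n. \<Sum>m<n. A $$ (a, m) * u k $ m * cnj (u k $ b))" by (rule sum.swap)
  also have "\<dots> = (\<Sum>k<n. (A *\<^sub>v u k) $ a * cnj (u k $ b))"
    using A a uk by (auto simp: scalar_prod_def atLeast0LessThan row_def sum_distrib_right intro!: sum.cong)
  also have "\<dots> = (\<Sum>k<n. d k * (u k $ a * cnj (u k $ b)))"
    using ev uk a by (auto intro!: sum.cong)
  also have "\<dots> = gproj n d u {..<n} $$ (a, b)" using a b by (simp add: gproj_def)
  finally show "A $$ (a, b) = gproj n d u {..<n} $$ (a, b)" .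
qed (use A in auto)



lemma braket_cscalar: "dim_vec x = dim_vec y \<Longrightarrow> braket x y = y \<bullet>c x"
  by (simp add: braket_def scalar_prod_def atLeast0LessThan mult.commute)

lemma braket_self: "braket x x = of_real (\<Sum>i<dim_vec x. (cmod (x $ i))^2)"
proof -
  have e: "cnj z * z = of_real ((cmod z)^2)" for z :: complex
    by (simp add: complex_norm_square[symmetric] mult.commute del: of_real_power)
  show ?thesis unfolding braket_def e by simp
qed

lemma braket_self_zero: "x \<in> carrier_vec n \<Longrightarrow> braket x x = 0 \<longleftrightarrow> x = 0\<^sub>v n"
proof -
  assume x: "x \<in> carrier_vec n"
  have "braket x x = x \<bullet>c x" using braket_cscalar by simp
  thus ?thesis using conjugate_square_eq_0_vec[OF x] by simp
qed

lemma braket_smult_left: "braket (c \<cdot>\<^sub>v x) y = cnj c * braket x y"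
  by (simp add: braket_def sum_distrib_left mult_ac)

lemma braket_smult_right: "dim_vec y = dim_vec x \<Longrightarrow> braket x (c \<cdot>\<^sub>v y) = c * braket x y"
  by (simp add: braket_def sum_distrib_left mult_ac)

lemma ONB_extend:
  assumes v: "v \<in> carrier_vec n" and v0: "v \<noteq> 0\<^sub>v n"
  shows "\<exists>w c. orthonormal n w \<and> w 0 = c \<cdot>\<^sub>v v"
proof -
  interpret cof_vec_space n "TYPE(complex)" .
  define b where "b = basis_completion v"
  from basis_completion[OF v v0, folded b_def]
  have b: "set b \<subseteq> carrier_vec n" and dist: "distinct b" and ind: "\<not> lin_dep (set b)"
    and lb: "length b = n" and hb: "hd b = v" by auto
  have n: "n > 0" using v v0 by (cases n) auto
  define ws where "ws = gram_schmidt n b"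
  from gram_schmidt_result[OF b dist ind ws_def]
  have orth: "corthogonal ws" and wsc: "set ws \<subseteq> carrier_vec n" and lws: "length ws = n" using lb by auto
  from n lb hb obtain vs where bv: "b = v # vs" by (cases b) auto
  have hws: "hd ws = v" unfolding ws_def bv using gram_schmidt_hd[OF v] by simp
  have ws0: "ws ! 0 = v" using hws n lws by (cases ws) auto
  have wsk: "k < n \<Longrightarrow> ws ! k \<in> carrier_vec n" for k using wsc lws by auto
  define r where "r k = Re (braket (ws ! k) (ws ! k))" for k
  have br: "k < n \<Longrightarrow> braket (ws ! j) (ws ! k) = (if j = k then of_real (r k) else 0)" if "j < n" for j k
  proof -
    assume k: "k < n"
    have "braket (ws ! j) (ws ! k) = ws ! k \<bullet>c ws ! j" using wsk[OF k] wsk[OF that] by (simp add: braket_cscalar)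
    hence "j \<noteq> k \<Longrightarrow> braket (ws ! j) (ws ! k) = 0" using corthogonalD[OF orth] that k lws by auto
    moreover have "braket (ws ! k) (ws ! k) = of_real (r k)" unfolding r_def braket_self by simp
    ultimately show ?thesis by auto
  qed
  have rpos: "k < n \<Longrightarrow> r k > 0" for k
  proof -
    assume k: "k < n"
    have "r k \<ge> 0" unfolding r_def braket_self by (auto intro!: sum_nonneg)
    moreover have "ws ! k \<noteq> 0\<^sub>v n"
    proof
      assume "ws ! k = 0\<^sub>v n"
      hence "ws ! k \<bullet>c ws ! k = 0" by simp
      thus False using corthogonalD[OF orth, of k k] k lws by auto
    qed
    hence "braket (ws ! k) (ws ! k) \<noteq> 0" using braket_self_zero[OF wsk[OF k]] by simp
    hence "r k \<noteq> 0" using br[OF k k] by auto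
    ultimately show ?thesis by auto
  qed
  define w where "w k = complex_of_real (1 / sqrt (r k)) \<cdot>\<^sub>v ws ! k" for k
  have "orthonormal n w"
    unfolding orthonormal_def
  proof (intro conjI allI impI)
    fix k assume "k < n" thus "w k \<in> carrier_vec n" using wsk unfolding w_def by auto
  next
    fix j k assume j: "j < n" and k: "k < n"
    have "braket (w j) (w k) = of_real (1 / sqrt (r j)) * of_real (1 / sqrt (r k)) * braket (ws ! j) (ws ! k)"
      unfolding w_def braket_smult_left using wsk[OF j] wsk[OF k]
      by (subst braket_smult_right) auto
    also have "\<dots> = (if j = k then 1 else 0)"
    proof (cases "j = k")
      case True
      have rr: "(1 / sqrt (r k)) * (1 / sqrt (r k)) * r k = 1" using rpos[OF k]
        by (simp add: field_simps)
      have "of_real (1 / sqrt (r k)) * of_real (1 / sqrt (r k)) * of_real (r k) = (of_real ((1 / sqrt (r k)) * (1 / sqrt (r k)) * r k) :: complex)"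
        by (simp only: of_real_mult)
      also have "\<dots> = 1" unfolding rr by simp
      finally show ?thesis using True br[OF k k] by simp
    qed (use br[OF j k] in simp)
    finally show "braket (w j) (w k) = (if j = k then 1 else 0)" .
  qed
  moreover have "w 0 = complex_of_real (1 / sqrt (r 0)) \<cdot>\<^sub>v v" unfolding w_def ws0 ..
  ultimately show ?thesis by blast
qed



lemma mult_vec_sum:
  fixes A :: "complex mat"
  assumes A: "A \<in> carrier_mat n n" and z: "\<And>i. i \<in> I \<Longrightarrow> z i \<in> carrier_vec n"
  shows "A *\<^sub>v vec n (\<lambda>a. \<Sum>i\<in>I. f i * z i $ a) = vec n (\<lambda>a. \<Sum>i\<in>I. f i * (A *\<^sub>v z i) $ a)"
proof (rule eq_vecI)
  fix a assume "a < dim_vec (vec n (\<lambda>a. \<Sum>i\<in>I. f i * (A *\<^sub>v z i) $ a))"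
  hence a: "a < n" by simp
  have "(A *\<^sub>v vec n (\<lambda>a. \<Sum>i\<in>I. f i * z i $ a)) $ a = (\<Sum>b<n. A $$ (a, b) * (\<Sum>i\<in>I. f i * z i $ b))"
    using A a by (simp add: scalar_prod_def atLeast0LessThan row_def)
  also have "\<dots> = (\<Sum>b<n. \<Sum>i\<in>I. f i * (A $$ (a, b) * z i $ b))"
    unfolding sum_distrib_left by (intro sum.cong refl) (simp add: mult_ac)
  also have "\<dots> = (\<Sum>i\<in>I. \<Sum>b<n. f i * (A $$ (a, b) * z i $ b))"
    by (rule sum.swap)
  also have "\<dots> = (\<Sum>i\<in>I. f i * (A *\<^sub>v z i) $ a)"
  proof (intro sum.cong refl)
    fix i assume "i \<in> I" hence "dim_vec (z i) = n" using z by auto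
    thus "(\<Sum>b<n. f i * (A $$ (a, b) * z i $ b)) = f i * (A *\<^sub>v z i) $ a"
      using A a by (simp add: scalar_prod_def atLeast0LessThan row_def sum_distrib_left)
  qed
  finally show "(A *\<^sub>v vec n (\<lambda>a. \<Sum>i\<in>I. f i * z i $ a)) $ a = vec n (\<lambda>a. \<Sum>i\<in>I. f i * (A *\<^sub>v z i) $ a) $ a"
    using a by simp
qed (use A in simp)

theorem spectral:
  assumes "A \<in> carrier_mat n n" "hermitian A"
  shows "\<exists>u d. orthonormal n u \<and> (\<forall>k<n. A *\<^sub>v u k = complex_of_real (d k) \<cdot>\<^sub>v u k)"
  using assms
proof (induction n arbitrary: A)
  case 0
  then show ?case by (auto simp: orthonormal_def)
next
  case (Suc m)
  define n where "n = Suc m"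
  have A: "A \<in> carrier_mat n n" and h: "hermitian A" using Suc n_def by auto
  obtain e where "eigenvalue A e" using spectrum_non_empty[OF A] unfolding n_def spectrum_def by auto
  then obtain v where "eigenvector A v e" unfolding eigenvalue_def by auto
  hence v: "v \<in> carrier_vec n" and v0: "v \<noteq> 0\<^sub>v n" and Av: "A *\<^sub>v v = e \<cdot>\<^sub>v v"
    unfolding eigenvector_def using A by auto
  obtain w c where on: "orthonormal n w" and w0: "w 0 = c \<cdot>\<^sub>v v" using ONB_extend[OF v v0] by blast
  have wc: "k < n \<Longrightarrow> w k \<in> carrier_vec n" for k using orthonormalD(1)[OF on] .
  have wd: "k < n \<Longrightarrow> dim_vec (w k) = n" for k using wc by auto
  have n0: "0 < n" unfolding n_def by simp
  have Aw0: "A *\<^sub>v w 0 = e \<cdot>\<^sub>v w 0"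
    unfolding w0 using A v Av by (simp add: mult_mat_vec smult_smult_assoc mult.commute)
  have "braket (w 0) (A *\<^sub>v w 0) = e"
    unfolding Aw0 using orthonormalD(2)[OF on n0 n0] wd[OF n0] by (subst braket_smult_right) auto
  hence eR: "e = of_real (Re e)" using hermitian_quad_real[OF h A wc[OF n0]] by simp
  define A3 where "A3 = mat m m (\<lambda>(i, j). braket (w (Suc i)) (A *\<^sub>v w (Suc j)))"
  have A3: "A3 \<in> carrier_mat m m" unfolding A3_def by simp
  have "hermitian A3"
  proof (rule hermitianI[OF A3])
    fix i j assume i: "i < m" and j: "j < m"
    have wi: "w (Suc i) \<in> carrier_vec n" and wj: "w (Suc j) \<in> carrier_vec n" using wc i j n_def by auto
    have "A3 $$ (j, i) = braket (w (Suc j)) (A *\<^sub>v w (Suc i))" using i j by (simp add: A3_def)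
    also have "\<dots> = cnj (braket (A *\<^sub>v w (Suc i)) (w (Suc j)))"
      using A wi wj by (subst braket_cnj) auto
    also have "braket (A *\<^sub>v w (Suc i)) (w (Suc j)) = braket (w (Suc i)) (A *\<^sub>v w (Suc j))"
      using hermitian_braket[OF h A wi wj] by simp
    finally show "A3 $$ (j, i) = cnj (A3 $$ (i, j))" using i j by (simp add: A3_def)
  qed
  from Suc.IH[OF A3 this] obtain y d where ony: "orthonormal m y"
    and eigy: "\<And>k. k < m \<Longrightarrow> A3 *\<^sub>v y k = complex_of_real (d k) \<cdot>\<^sub>v y k" by blast
  have yd: "k < m \<Longrightarrow> dim_vec (y k) = m" for k using orthonormalD(1)[OF ony] by auto
  define u where "u k = (case k of 0 \<Rightarrow> w 0 | Suc k' \<Rightarrow> vec n (\<lambda>a. \<Sum>i<m. y k' $ i * w (Suc i) $ a))" for k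
  define d' where "d' k = (case k of 0 \<Rightarrow> Re e | Suc k' \<Rightarrow> d k')" for k
  have u0: "u 0 = w 0" and uS: "u (Suc k) = vec n (\<lambda>a. \<Sum>i<m. y k $ i * w (Suc i) $ a)" for k
    unfolding u_def by auto
  have wSc: "i \<in> {..<m} \<Longrightarrow> w (Suc i) \<in> carrier_vec n" for i using wc n_def by auto
  have b1: "braket (w l) (u (Suc k)) = (\<Sum>i<m. y k $ i * braket (w l) (w (Suc i)))" if "l < n" for l k
    unfolding uS using braket_vec_sum[OF wc[OF that], where S="{..<m}" and f="\<lambda>i. y k $ i" and z="\<lambda>i. w (Suc i)"] by simp
  have b2: "braket (w l) (u (Suc k)) = (if l = 0 then 0 else y k $ (l - 1))" if l: "l < n" and k: "k < m" for l k
  proof -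
    have "braket (w l) (u (Suc k)) = (\<Sum>i<m. y k $ i * (if l = Suc i then 1 else 0))"
      unfolding b1[OF l] using orthonormalD(2)[OF on l] n_def by (intro sum.cong refl) auto
    also have "\<dots> = (if l = 0 then 0 else y k $ (l - 1))"
    proof (cases l)
      case (Suc l')
      hence "l' < m" using l n_def by simp
      thus ?thesis using Suc sum_delta_in'[of "{..<m}" l' "\<lambda>i. y k $ i"] by (simp add: eq_commute[of l'])
    qed simp
    finally show ?thesis .
  qed
  have ucar: "k < n \<Longrightarrow> u k \<in> carrier_vec n" for k
    using wc[OF n0] by (cases k) (auto simp: u_def)
  have "orthonormal n u"
    unfolding orthonormal_def
  proof (intro conjI allI impI)
    fix k assume "k < n" thus "u k \<in> carrier_vec n" by (rule ucar)
  next
    fix j k assume j: "j < n" and k: "k < n"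
    show "braket (u j) (u k) = (if j = k then 1 else 0)"
    proof (cases k)
      case 0
      show ?thesis
      proof (cases j)
        case 0 thus ?thesis using `k = 0` u0 orthonormalD(2)[OF on n0 n0] by simp
      next
        case (Suc j')
        have "braket (u j) (u k) = cnj (braket (w 0) (u (Suc j')))"
          using `k = 0` Suc u0 ucar[OF j] wc[OF n0] by (subst braket_cnj) auto
        also have "\<dots> = 0" using b2[OF n0, of j'] Suc j n_def by simp
        finally show ?thesis using Suc `k = 0` by simp
      qed
    next
      case (Suc k')
      have k': "k' < m" using Suc k n_def by simp
      show ?thesis
      proof (cases j)
        case 0 thus ?thesis using Suc b2[OF n0 k'] u0 by simp
      next
        case (Suc j')
        have j': "j' < m" using Suc j n_def by simp
        have "braket (u j) (u k) = (\<Sum>i<m. y k' $ i * braket (u j) (w (Suc i)))"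
          unfolding `k = Suc k'` uS using braket_vec_sum[OF ucar[OF j], where S="{..<m}" and f="\<lambda>i. y k' $ i" and z="\<lambda>i. w (Suc i)"] by simp
        also have "\<dots> = (\<Sum>i<m. y k' $ i * cnj (y j' $ i))"
        proof (intro sum.cong refl)
          fix i assume i: "i \<in> {..<m}"
          have "braket (u j) (w (Suc i)) = cnj (braket (w (Suc i)) (u (Suc j')))"
            using Suc ucar[OF j] wSc[OF i] by (subst braket_cnj) auto
          also have "\<dots> = cnj (y j' $ i)" using b2[of "Suc i" j'] i j' n_def by simp
          finally show "y k' $ i * braket (u j) (w (Suc i)) = y k' $ i * cnj (y j' $ i)" by simp
        qed
        also have "\<dots> = braket (y j') (y k')" using yd[OF j'] by (simp add: braket_def mult.commute)
        also have "\<dots> = (if j = k then 1 else 0)" using orthonormalD(2)[OF ony j' k'] Suc `k = Suc k'` by simp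
        finally show ?thesis .
      qed
    qed
  qed
  moreover have "\<forall>k<n. A *\<^sub>v u k = complex_of_real (d' k) \<cdot>\<^sub>v u k"
  proof (intro allI impI)
    fix k assume k: "k < n"
    show "A *\<^sub>v u k = complex_of_real (d' k) \<cdot>\<^sub>v u k"
    proof (cases k)
      case 0 thus ?thesis using Aw0 eR u0 by (simp add: d'_def)
    next
      case (Suc k')
      have k': "k' < m" using Suc k n_def by simp
      have Aw: "(A *\<^sub>v w (Suc i)) $ a = (\<Sum>l<m. A3 $$ (l, i) * w (Suc l) $ a)" if i: "i < m" and a: "a < n" for i a
      proof -
        have wi: "w (Suc i) \<in> carrier_vec n" using wc i n_def by simp
        have Awi: "A *\<^sub>v w (Suc i) \<in> carrier_vec n" using A wi by simp
        have "(A *\<^sub>v w (Suc i)) $ a = (\<Sum>l<n. braket (w l) (A *\<^sub>v w (Suc i)) * w l $ a)"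
          using expansion[OF on Awi a] by simp
        also have "\<dots> = braket (w 0) (A *\<^sub>v w (Suc i)) * w 0 $ a + (\<Sum>l<m. braket (w (Suc l)) (A *\<^sub>v w (Suc i)) * w (Suc l) $ a)"
          unfolding n_def by (rule sum.lessThan_Suc_shift)
        also have "braket (w 0) (A *\<^sub>v w (Suc i)) = braket (A *\<^sub>v w 0) (w (Suc i))"
          using hermitian_braket[OF h A wc[OF n0] wi] .
        also have "\<dots> = 0" unfolding Aw0 braket_smult_left using orthonormalD(2)[OF on n0, of "Suc i"] i n_def by simp
        finally show ?thesis using i by (simp add: A3_def)
      qed
      have "A *\<^sub>v u k = vec n (\<lambda>a. \<Sum>i<m. y k' $ i * (A *\<^sub>v w (Suc i)) $ a)"
        unfolding Suc uS by (rule mult_vec_sum[OF A wSc])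
      also have "\<dots> = vec n (\<lambda>a. \<Sum>l<m. (A3 *\<^sub>v y k') $ l * w (Suc l) $ a)"
      proof (rule eq_vecI)
        fix a assume "a < dim_vec (vec n (\<lambda>a. \<Sum>l<m. (A3 *\<^sub>v y k') $ l * w (Suc l) $ a))"
        hence a: "a < n" by simp
        have "(\<Sum>i<m. y k' $ i * (A *\<^sub>v w (Suc i)) $ a) = (\<Sum>i<m. \<Sum>l<m. y k' $ i * (A3 $$ (l, i) * w (Suc l) $ a))"
          using Aw a by (simp add: sum_distrib_left)
        also have "\<dots> = (\<Sum>l<m. \<Sum>i<m. y k' $ i * (A3 $$ (l, i) * w (Suc l) $ a))" by (rule sum.swap)
        also have "\<dots> = (\<Sum>l<m. (A3 *\<^sub>v y k') $ l * w (Suc l) $ a)"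
        proof (intro sum.cong refl)
          fix l assume l: "l \<in> {..<m}"
          have "(A3 *\<^sub>v y k') $ l = (\<Sum>i<m. A3 $$ (l, i) * y k' $ i)"
            using A3 yd[OF k'] l by (simp add: scalar_prod_def atLeast0LessThan row_def)
          moreover have "(\<Sum>i<m. y k' $ i * (A3 $$ (l, i) * w (Suc l) $ a)) = (\<Sum>i<m. (A3 $$ (l, i) * y k' $ i) * w (Suc l) $ a)"
            by (intro sum.cong refl) (simp add: mult_ac)
          ultimately show "(\<Sum>i<m. y k' $ i * (A3 $$ (l, i) * w (Suc l) $ a)) = (A3 *\<^sub>v y k') $ l * w (Suc l) $ a"
            by (simp add: sum_distrib_right)
        qed
        finally show "vec n (\<lambda>a. \<Sum>i<m. y k' $ i * (A *\<^sub>v w (Suc i)) $ a) $ a = vec n (\<lambda>a. \<Sum>l<m. (A3 *\<^sub>v y k') $ l * w (Suc l) $ a) $ a"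
          using a by simp
      qed simp
      also have "\<dots> = complex_of_real (d' k) \<cdot>\<^sub>v u k"
        unfolding eigy[OF k'] Suc uS d'_def using yd[OF k']
        by (auto simp: sum_distrib_left mult_ac intro!: eq_vecI)
      finally show ?thesis .
    qed
  qed
  ultimately show ?case unfolding n_def by blast
qed



lemma spectral_gproj:
  assumes A: "A \<in> carrier_mat n n" and h: "hermitian A"
  obtains u d where "orthonormal n u" "A = gproj n (\<lambda>k. complex_of_real (d k)) u {..<n}"
     "\<forall>k<n. braket (u k) (A *\<^sub>v u k) = of_real (d k)"
proof -
  obtain u d where on: "orthonormal n u" and ev: "\<forall>k<n. A *\<^sub>v u k = complex_of_real (d k) \<cdot>\<^sub>v u k"
    using spectral[OF A h] by blast
  have "braket (u k) (A *\<^sub>v u k) = of_real (d k)" if k: "k < n" for k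
  proof -
    have uk: "u k \<in> carrier_vec n" using orthonormalD(1)[OF on k] .
    have "A *\<^sub>v u k = complex_of_real (d k) \<cdot>\<^sub>v u k" using ev k by auto
    hence "braket (u k) (A *\<^sub>v u k) = of_real (d k) * braket (u k) (u k)"
      using uk by (simp add: braket_smult_right)
    thus ?thesis using orthonormalD(2)[OF on k k] by simp
  qed
  moreover have "A = gproj n (\<lambda>k. complex_of_real (d k)) u {..<n}"
    using ev by (intro spectral_rep[OF on A]) auto
  ultimately show thesis using on that[of u d] by auto
qed


lemma psd_spectral:
  assumes A: "A \<in> carrier_mat n n" and p: "psd A"
  obtains u d where "orthonormal n u" "A = gproj n (\<lambda>k. complex_of_real (d k)) u {..<n}" "\<forall>k<n. d k \<ge> 0"
proof -
  have h: "hermitian A" using p unfolding psd_def by auto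
  obtain u d where on: "orthonormal n u" and Ad: "A = gproj n (\<lambda>k. complex_of_real (d k)) u {..<n}"
    and q: "\<forall>k<n. braket (u k) (A *\<^sub>v u k) = of_real (d k)" by (rule spectral_gproj[OF A h])
  have "d k \<ge> 0" if k: "k < n" for k
  proof -
    have uk: "u k \<in> carrier_vec n" using orthonormalD(1)[OF on k] .
    have "Re (braket (u k) (A *\<^sub>v u k)) \<ge> 0" using p uk A unfolding psd_def by auto
    thus ?thesis using q k by simp
  qed
  thus thesis using on Ad that[of u d] by auto
qed

lemma onb_image: "orthonormal n u \<Longrightarrow> u ` {..<n} \<subseteq> carrier_vec n"
  using orthonormalD(1) by blast

lemma psd_kernel:
  assumes B: "B \<in> carrier_mat n n" and p: "psd B" and w: "w \<in> carrier_vec n"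
    and z: "braket w (B *\<^sub>v w) = 0"
  shows "B *\<^sub>v w = 0\<^sub>v n"
proof -
  obtain u b where on: "orthonormal n u" and Bb: "B = gproj n (\<lambda>k. complex_of_real (b k)) u {..<n}"
    and b: "\<forall>k<n. b k \<ge> 0" by (rule psd_spectral[OF B p])
  have "of_real (\<Sum>k<n. b k * (cmod (braket (u k) w))^2) = (0::complex)"
    using z unfolding Bb gproj_quad[OF onb_image[OF on] w] .
  hence "(\<Sum>k<n. b k * (cmod (braket (u k) w))^2) = 0" by (simp only: of_real_eq_0_iff)
  hence "\<forall>k\<in>{..<n}. b k * (cmod (braket (u k) w))^2 = 0"
    using b by (subst sum_nonneg_eq_0_iff[symmetric]) auto
  hence z': "k < n \<Longrightarrow> complex_of_real (b k) * braket (u k) w = 0" for k by auto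
  show ?thesis unfolding Bb gproj_mult_vec[OF onb_image[OF on] w]
  proof (rule eq_vecI)
    fix i assume "i < dim_vec (0\<^sub>v n :: complex vec)"
    have "(\<Sum>k<n. complex_of_real (b k) * braket (u k) w * u k $ i) = 0"
      using z' by (intro sum.neutral) auto
    thus "vec n (\<lambda>a. \<Sum>k<n. complex_of_real (b k) * braket (u k) w * u k $ a) $ i = 0\<^sub>v n $ i"
      using \<open>i < dim_vec (0\<^sub>v n :: complex vec)\<close> by simp
  qed simp
qed

lemma braket_add_right: "dim_vec y = dim_vec x \<Longrightarrow> dim_vec z = dim_vec x \<Longrightarrow> braket x (y + z) = braket x y + braket x z"
  by (simp add: braket_def sum.distrib distrib_left)

lemma psd_quad_real:
  assumes "psd B" "B \<in> carrier_mat n n" "w \<in> carrier_vec n"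
  shows "braket w (B *\<^sub>v w) = of_real (Re (braket w (B *\<^sub>v w)))" "Re (braket w (B *\<^sub>v w)) \<ge> 0"
  using hermitian_quad_real[of B n w] assms unfolding psd_def by auto

lemma psd_sqrt_unique:
  assumes B1: "B1 \<in> carrier_mat n n" and B2: "B2 \<in> carrier_mat n n" and p1: "psd B1" and p2: "psd B2"
    and eq: "B1 * B1 = B2 * B2"
  shows "B1 = B2"
proof -
  define D where "D = B1 - B2"
  have D: "D \<in> carrier_mat n n" using B1 B2 unfolding D_def by auto
  have h1: "hermitian B1" and h2: "hermitian B2" using p1 p2 unfolding psd_def by auto
  have hD: "hermitian D"
  proof (rule hermitianI[OF D])
    fix i j assume ij: "i < n" "j < n"
    have "B1 $$ (j, i) = cnj (B1 $$ (i, j))" "B2 $$ (j, i) = cnj (B2 $$ (i, j))"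
      using hermitianD[OF h1 B1 ij] hermitianD[OF h2 B2 ij] by auto
    thus "D $$ (j, i) = cnj (D $$ (i, j))" using B1 B2 ij by (simp add: D_def)
  qed
  obtain w e where on: "orthonormal n w" and De: "D = gproj n (\<lambda>k. complex_of_real (e k)) w {..<n}"
    and q: "\<forall>k<n. braket (w k) (D *\<^sub>v w k) = of_real (e k)" by (rule spectral_gproj[OF D hD])
  have zero: "B1 * D + D * B2 = 0\<^sub>m n n"
  proof -
    have "B1 * D + D * B2 = (B1 * B1 - B1 * B2) + (B1 * B2 - B2 * B2)"
      unfolding D_def using B1 B2
      by (simp add: mult_minus_distrib_mat minus_mult_distrib_mat)
    also have "\<dots> = 0\<^sub>m n n" using eq B1 B2 by (auto intro!: eq_matI)
    finally show ?thesis .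
  qed
  have zmv: "x \<in> carrier_vec n \<Longrightarrow> 0\<^sub>m n n *\<^sub>v x = 0\<^sub>v n" for x :: "complex vec"
    by (rule eq_vecI) (auto simp: scalar_prod_def)
  have e0: "e k = 0" if k: "k < n" for k
  proof (rule ccontr)
    assume ne: "e k \<noteq> 0"
    have wk: "w k \<in> carrier_vec n" using orthonormalD(1)[OF on k] .
    have Dw: "D *\<^sub>v w k = of_real (e k) \<cdot>\<^sub>v w k"
      unfolding De gproj_eig[OF on subset_refl k] using k by simp
    have "(B1 * D + D * B2) *\<^sub>v w k = B1 *\<^sub>v (D *\<^sub>v w k) + D *\<^sub>v (B2 *\<^sub>v w k)"
    proof -
      have "(B1 * D + D * B2) *\<^sub>v w k = (B1 * D) *\<^sub>v w k + (D * B2) *\<^sub>v w k"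
        using B1 B2 D wk by (intro add_mult_distrib_mat_vec[of _ n n]) auto
      thus ?thesis using B1 B2 D wk by simp
    qed
    hence "0\<^sub>v n = of_real (e k) \<cdot>\<^sub>v (B1 *\<^sub>v w k) + D *\<^sub>v (B2 *\<^sub>v w k)"
      unfolding zero Dw zmv[OF wk] using wk B1 by (simp add: mult_mat_vec)
    hence "braket (w k) (0\<^sub>v n) = braket (w k) (of_real (e k) \<cdot>\<^sub>v (B1 *\<^sub>v w k)) + braket (w k) (D *\<^sub>v (B2 *\<^sub>v w k))"
      using wk B1 B2 D by (simp add: braket_add_right)
    moreover have "braket (w k) (0\<^sub>v n) = 0" using wk by (simp add: braket_def)
    moreover have "braket (w k) (of_real (e k) \<cdot>\<^sub>v (B1 *\<^sub>v w k)) = of_real (e k) * braket (w k) (B1 *\<^sub>v w k)"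
      using wk B1 by (subst braket_smult_right) auto
    moreover have "braket (w k) (D *\<^sub>v (B2 *\<^sub>v w k)) = of_real (e k) * braket (w k) (B2 *\<^sub>v w k)"
      using hermitian_braket[OF hD D wk, of "B2 *\<^sub>v w k"] B2 wk unfolding Dw braket_smult_left by simp
    ultimately have "0 = of_real (e k) * (braket (w k) (B1 *\<^sub>v w k) + braket (w k) (B2 *\<^sub>v w k))"
      by (simp add: distrib_left)
    hence s0: "braket (w k) (B1 *\<^sub>v w k) + braket (w k) (B2 *\<^sub>v w k) = 0" using ne by simp
    have r1: "Re (braket (w k) (B1 *\<^sub>v w k)) \<ge> 0" "Re (braket (w k) (B2 *\<^sub>v w k)) \<ge> 0"
      using psd_quad_real(2)[OF p1 B1 wk] psd_quad_real(2)[OF p2 B2 wk] by auto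
    have "Re (braket (w k) (B1 *\<^sub>v w k)) = 0" "Re (braket (w k) (B2 *\<^sub>v w k)) = 0"
      using arg_cong[OF s0, of Re] r1 by auto
    hence "braket (w k) (B1 *\<^sub>v w k) = 0" "braket (w k) (B2 *\<^sub>v w k) = 0"
      using psd_quad_real(1)[OF p1 B1 wk] psd_quad_real(1)[OF p2 B2 wk] by auto
    hence "B1 *\<^sub>v w k = 0\<^sub>v n" "B2 *\<^sub>v w k = 0\<^sub>v n"
      using psd_kernel[OF B1 p1 wk] psd_kernel[OF B2 p2 wk] by auto
    hence "D *\<^sub>v w k = 0\<^sub>v n" unfolding D_def using B1 B2 wk by (simp add: minus_mult_distrib_mat_vec)
    hence "of_real (e k) \<cdot>\<^sub>v w k = 0\<^sub>v n" using Dw by simp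
    hence "braket (w k) (of_real (e k) \<cdot>\<^sub>v w k) = 0" using wk by (simp add: braket_def)
    hence "of_real (e k) * braket (w k) (w k) = 0" using wk by (subst (asm) braket_smult_right) auto
    thus False using ne orthonormalD(2)[OF on k k] by simp
  qed
  have "D = 0\<^sub>m n n" unfolding De using e0 by (auto simp: gproj_def intro!: eq_matI)
  show ?thesis
  proof (rule eq_matI)
    fix i j assume "i < dim_row B2" "j < dim_col B2"
    hence ij: "i < n" "j < n" using B2 by auto
    have "D $$ (i, j) = 0" using \<open>D = 0\<^sub>m n n\<close> ij by simp
    thus "B1 $$ (i, j) = B2 $$ (i, j)" using ij B1 B2 by (simp add: D_def)
  qed (use B1 B2 in auto)
qed



lemma hermitian_carrier: "hermitian A \<Longrightarrow> A \<in> carrier_mat (dim_row A) (dim_row A)"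
  unfolding hermitian_def by (intro carrier_matI) auto

lemma mat_abs_eq:
  assumes B: "B \<in> carrier_mat n n" and p: "psd B" and sq: "B * B = dagger A * A"
  shows "mat_abs A = B"
  unfolding mat_abs_def
proof (rule the_equality)
  show "psd B \<and> B * B = dagger A * A" using p sq by (intro conjI)
next
  fix B' assume a: "psd B' \<and> B' * B' = dagger A * A"
  have p': "psd B'" using a by (rule conjunct1)
  have sq': "B' * B' = B * B" using a sq by simp
  have B'c: "B' \<in> carrier_mat (dim_row B') (dim_row B')"
    using p' unfolding psd_def using hermitian_carrier by blast
  have "dim_row (B' * B') = dim_row (B * B)" using sq' by (rule arg_cong)
  hence "dim_row B' = n" using B by simp
  hence B': "B' \<in> carrier_mat n n" using B'c by (simp only:)
  show "B' = B" by (rule psd_sqrt_unique[OF B' B p' p sq'])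
qed

lemma tn_psd:
  assumes P: "P \<in> carrier_mat n n" and p: "psd P"
  shows "trace_norm P = Re (mtrace P)"
proof -
  have "dagger P = P" using p unfolding psd_def hermitian_def by (elim conjE)
  hence "P * P = dagger P * P" by (simp only:)
  hence "mat_abs P = P" by (rule mat_abs_eq[OF P p])
  thus ?thesis unfolding trace_norm_def by (simp only:)
qed

lemma tn_gproj:
  assumes on: "orthonormal n u" and Ad: "A = gproj n (\<lambda>k. complex_of_real (d k)) u {..<n}"
  shows "trace_norm A = (\<Sum>k<n. \<bar>d k\<bar>)"
proof -
  define B where "B = gproj n (\<lambda>k. complex_of_real \<bar>d k\<bar>) u {..<n}"
  have B: "B \<in> carrier_mat n n" unfolding B_def by simp
  have p: "psd B" unfolding B_def by (rule gproj_psd[OF onb_image[OF on]]) auto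
  have "B * B = gproj n (\<lambda>k. complex_of_real \<bar>d k\<bar> * complex_of_real \<bar>d k\<bar>) u {..<n}"
    unfolding B_def by (rule gproj_mult_orth[OF on subset_refl])
  also have "(\<lambda>k. complex_of_real \<bar>d k\<bar> * complex_of_real \<bar>d k\<bar>) = (\<lambda>k. complex_of_real (d k) * complex_of_real (d k))"
  proof
    fix k
    have "\<bar>d k\<bar> * \<bar>d k\<bar> = d k * d k" by (simp add: abs_mult_self_eq)
    thus "complex_of_real \<bar>d k\<bar> * complex_of_real \<bar>d k\<bar> = complex_of_real (d k) * complex_of_real (d k)"
      by (metis of_real_mult)
  qed
  also have "gproj n \<dots> u {..<n} = A * A" unfolding Ad by (rule gproj_mult_orth[OF on subset_refl, symmetric])
  finally have sq: "B * B = A * A" .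
  have dA: "dagger A = A" unfolding Ad dagger_gproj by simp
  have "mat_abs A = B" by (rule mat_abs_eq[OF B p]) (simp only: sq dA)
  hence "trace_norm A = Re (mtrace B)" unfolding trace_norm_def by simp
  also have "mtrace B = (\<Sum>k<n. complex_of_real \<bar>d k\<bar> * braket (u k) (u k))"
    unfolding B_def by (rule gproj_trace[OF onb_image[OF on]])
  also have "\<dots> = (\<Sum>k<n. complex_of_real \<bar>d k\<bar>)" using orthonormalD(2)[OF on] by simp
  finally show ?thesis by simp
qed

lemma tn_key:
  assumes X: "X \<in> carrier_mat n n" and h: "hermitian X" and on: "orthonormal n u"
    and s: "\<And>k. k < n \<Longrightarrow> \<bar>s k\<bar> \<le> 1"
  shows "(\<Sum>k<n. s k * Re (braket (u k) (X *\<^sub>v u k))) \<le> trace_norm X"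
proof -
  obtain w e where onw: "orthonormal n w" and Xe: "X = gproj n (\<lambda>k. complex_of_real (e k)) w {..<n}"
    and q: "\<forall>k<n. braket (w k) (X *\<^sub>v w k) = of_real (e k)" by (rule spectral_gproj[OF X h])
  define c where "c l k = (cmod (braket (w l) (u k)))^2" for l k
  have c0: "c l k \<ge> 0" for l k unfolding c_def by simp
  have re: "Re (braket (u k) (X *\<^sub>v u k)) = (\<Sum>l<n. e l * c l k)" if k: "k < n" for k
    unfolding Xe gproj_quad[OF onb_image[OF onw] orthonormalD(1)[OF on k]] c_def by simp
  have csum: "(\<Sum>k<n. c l k) = 1" if l: "l < n" for l
  proof -
    have wl: "w l \<in> carrier_vec n" using orthonormalD(1)[OF onw l] .
    have "(\<Sum>k<n. cnj (braket (u k) (w l)) * braket (u k) (w l)) = braket (w l) (w l)"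
      by (rule parseval[OF on wl wl])
    also have "\<dots> = 1" using orthonormalD(2)[OF onw l l] by simp
    also have "cnj (braket (u k) (w l)) * braket (u k) (w l) = of_real (c l k)" if k: "k < n" for k
    proof -
      have "cmod (braket (u k) (w l)) = cmod (braket (w l) (u k))"
        using braket_cnj[of "u k" "w l"] orthonormalD(1)[OF on k] wl by (metis carrier_vecD complex_mod_cnj)
      thus ?thesis unfolding c_def by (simp add: complex_norm_square[symmetric] mult.commute del: of_real_power)
    qed
    hence "(\<Sum>k<n. cnj (braket (u k) (w l)) * braket (u k) (w l)) = (\<Sum>k<n. of_real (c l k))" by simp
    finally have "(\<Sum>k<n. complex_of_real (c l k)) = 1" by simp
    hence "complex_of_real (\<Sum>k<n. c l k) = 1" by simp
    thus ?thesis using of_real_eq_1_iff by blast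
  qed
  have "(\<Sum>k<n. s k * Re (braket (u k) (X *\<^sub>v u k))) = (\<Sum>k<n. \<Sum>l<n. s k * e l * c l k)"
    using re by (simp add: sum_distrib_left mult.assoc)
  also have "\<dots> \<le> (\<Sum>k<n. \<Sum>l<n. \<bar>e l\<bar> * c l k)"
  proof (intro sum_mono)
    fix k l assume k: "k \<in> {..<n}" and l: "l \<in> {..<n}"
    have "s k * e l \<le> \<bar>s k * e l\<bar>" by simp
    also have "\<dots> \<le> \<bar>e l\<bar>" using s[of k] k by (simp add: abs_mult mult_left_le_one_le)
    finally show "s k * e l * c l k \<le> \<bar>e l\<bar> * c l k" using c0 by (intro mult_right_mono) auto
  qed
  also have "\<dots> = (\<Sum>l<n. \<bar>e l\<bar> * (\<Sum>k<n. c l k))" by (subst sum.swap) (simp add: sum_distrib_left)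
  also have "\<dots> = (\<Sum>l<n. \<bar>e l\<bar>)" using csum by simp
  also have "\<dots> = trace_norm X" using tn_gproj[OF onw Xe] by simp
  finally show ?thesis .
qed

lemma hermitian_add:
  assumes X: "X \<in> carrier_mat n n" and Y: "Y \<in> carrier_mat n n" and hX: "hermitian X" and hY: "hermitian Y"
  shows "hermitian (X + Y)"
proof (rule hermitianI)
  show "X + Y \<in> carrier_mat n n" using X Y by simp
  fix i j assume ij: "i < n" "j < n"
  have "X $$ (j, i) = cnj (X $$ (i, j))" "Y $$ (j, i) = cnj (Y $$ (i, j))"
    using hermitianD[OF hX X ij] hermitianD[OF hY Y ij] by auto
  thus "(X + Y) $$ (j, i) = cnj ((X + Y) $$ (i, j))" using X Y ij by simp
qed

lemma hermitian_smult:
  assumes X: "X \<in> carrier_mat n n" and hX: "hermitian X"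
  shows "hermitian (complex_of_real c \<cdot>\<^sub>m X)"
proof (rule hermitianI)
  show "complex_of_real c \<cdot>\<^sub>m X \<in> carrier_mat n n" using X by simp
  fix i j assume ij: "i < n" "j < n"
  have "X $$ (j, i) = cnj (X $$ (i, j))" using hermitianD[OF hX X ij] by auto
  thus "(complex_of_real c \<cdot>\<^sub>m X) $$ (j, i) = cnj ((complex_of_real c \<cdot>\<^sub>m X) $$ (i, j))" using X ij by simp
qed

lemma tn_triangle:
  assumes X: "X \<in> carrier_mat n n" and Y: "Y \<in> carrier_mat n n" and hX: "hermitian X" and hY: "hermitian Y"
  shows "trace_norm (X + Y) \<le> trace_norm X + trace_norm Y"
proof -
  have XY: "X + Y \<in> carrier_mat n n" using X Y by simp
  obtain u d where on: "orthonormal n u" and Zd: "X + Y = gproj n (\<lambda>k. complex_of_real (d k)) u {..<n}"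
    and q: "\<forall>k<n. braket (u k) ((X + Y) *\<^sub>v u k) = of_real (d k)"
    by (rule spectral_gproj[OF XY hermitian_add[OF X Y hX hY]])
  have dk: "d k = Re (braket (u k) (X *\<^sub>v u k)) + Re (braket (u k) (Y *\<^sub>v u k))" if k: "k < n" for k
  proof -
    have uk: "u k \<in> carrier_vec n" using orthonormalD(1)[OF on k] .
    have "(X + Y) *\<^sub>v u k = X *\<^sub>v u k + Y *\<^sub>v u k" using X Y uk by (rule add_mult_distrib_mat_vec)
    hence "braket (u k) ((X + Y) *\<^sub>v u k) = braket (u k) (X *\<^sub>v u k) + braket (u k) (Y *\<^sub>v u k)"
      using uk X Y by (simp add: braket_add_right)
    thus ?thesis using q k by (metis Re_complex_of_real plus_complex.simps(1))
  qed
  have "trace_norm (X + Y) = (\<Sum>k<n. \<bar>d k\<bar>)" by (rule tn_gproj[OF on Zd])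
  also have "\<dots> = (\<Sum>k<n. sgn (d k) * Re (braket (u k) (X *\<^sub>v u k))) + (\<Sum>k<n. sgn (d k) * Re (braket (u k) (Y *\<^sub>v u k)))"
    unfolding sum.distrib[symmetric]
  proof (intro sum.cong refl)
    fix k assume k: "k \<in> {..<n}"
    define t where "t = sgn (d k)"
    have "\<bar>d k\<bar> = t * d k" unfolding t_def by (simp add: abs_sgn mult.commute)
    also have "\<dots> = t * Re (braket (u k) (X *\<^sub>v u k)) + t * Re (braket (u k) (Y *\<^sub>v u k))"
      using dk[of k] k by (simp add: distrib_left)
    finally show "\<bar>d k\<bar> = sgn (d k) * Re (braket (u k) (X *\<^sub>v u k)) + sgn (d k) * Re (braket (u k) (Y *\<^sub>v u k))"
      unfolding t_def .
  qed
  also have "\<dots> \<le> trace_norm X + trace_norm Y"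
    by (intro add_mono tn_key[OF X hX on] tn_key[OF Y hY on]) (simp_all add: abs_sgn_eq)
  finally show ?thesis .
qed

lemma tn_scale:
  assumes X: "X \<in> carrier_mat n n" and hX: "hermitian X"
  shows "trace_norm (complex_of_real c \<cdot>\<^sub>m X) = \<bar>c\<bar> * trace_norm X"
proof -
  obtain w e where onw: "orthonormal n w" and Xe: "X = gproj n (\<lambda>k. complex_of_real (e k)) w {..<n}"
    and q: "\<forall>k<n. braket (w k) (X *\<^sub>v w k) = of_real (e k)" by (rule spectral_gproj[OF X hX])
  have "complex_of_real c \<cdot>\<^sub>m X = gproj n (\<lambda>k. complex_of_real (c * e k)) w {..<n}"
    unfolding Xe by (auto simp: gproj_def sum_distrib_left mult_ac intro!: eq_matI)
  hence "trace_norm (complex_of_real c \<cdot>\<^sub>m X) = (\<Sum>k<n. \<bar>c * e k\<bar>)" by (rule tn_gproj[OF onw])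
  also have "\<dots> = \<bar>c\<bar> * (\<Sum>k<n. \<bar>e k\<bar>)" by (simp add: abs_mult sum_distrib_left)
  also have "(\<Sum>k<n. \<bar>e k\<bar>) = trace_norm X" using tn_gproj[OF onw Xe] by simp
  finally show ?thesis .
qed

definition msum :: "nat \<Rightarrow> ('j \<Rightarrow> complex mat) \<Rightarrow> 'j set \<Rightarrow> complex mat" where
  "msum n F J = mat n n (\<lambda>(a, b). \<Sum>j\<in>J. F j $$ (a, b))"

lemma tn_msum:
  assumes "finite J" and XJ: "\<And>j. j \<in> J \<Longrightarrow> X j \<in> carrier_mat n n \<and> hermitian (X j)"
  shows "hermitian (msum n (\<lambda>j. complex_of_real (c j) \<cdot>\<^sub>m X j) J) \<and>
    trace_norm (msum n (\<lambda>j. complex_of_real (c j) \<cdot>\<^sub>m X j) J) \<le> (\<Sum>j\<in>J. \<bar>c j\<bar> * trace_norm (X j))"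
  using assms
proof (induction J rule: finite_induct)
  case empty
  have "msum n (\<lambda>j. complex_of_real (c j) \<cdot>\<^sub>m X j) {} = gproj n (\<lambda>_. 0) (\<lambda>_. 0\<^sub>v n) ({} :: nat set)"
    by (auto simp: msum_def gproj_def intro!: eq_matI)
  moreover have "psd (gproj n (\<lambda>_. complex_of_real 0) (\<lambda>_. 0\<^sub>v n) ({} :: nat set))"
    by (rule gproj_psd) auto
  ultimately show ?case using tn_psd[of "gproj n (\<lambda>_. 0) (\<lambda>_. 0\<^sub>v n) ({} :: nat set)" n]
    unfolding psd_def by (simp add: gproj_trace)
next
  case (insert x J)
  define F where "F j = complex_of_real (c j) \<cdot>\<^sub>m X j" for j
  have Xx: "X x \<in> carrier_mat n n" "hermitian (X x)" using insert by auto
  have Fx: "F x \<in> carrier_mat n n" "hermitian (F x)" unfolding F_def using Xx hermitian_smult by auto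
  have IH: "hermitian (msum n F J)" "trace_norm (msum n F J) \<le> (\<Sum>j\<in>J. \<bar>c j\<bar> * trace_norm (X j))"
    using insert unfolding F_def by auto
  have M: "msum n F J \<in> carrier_mat n n" by (simp add: msum_def)
  have eq: "msum n F (insert x J) = F x + msum n F J"
    using insert(1,2) Fx by (auto simp: msum_def intro!: eq_matI)
  have "hermitian (msum n F (insert x J))" unfolding eq by (rule hermitian_add[OF Fx(1) M Fx(2) IH(1)])
  moreover have "trace_norm (msum n F (insert x J)) \<le> trace_norm (F x) + trace_norm (msum n F J)"
    unfolding eq by (rule tn_triangle[OF Fx(1) M Fx(2) IH(1)])
  moreover have "trace_norm (F x) = \<bar>c x\<bar> * trace_norm (X x)" unfolding F_def by (rule tn_scale[OF Xx])
  ultimately show ?case using IH(2) insert(1,2) unfolding F_def by simp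
qed



lemma sum_lessThan_add_nat: fixes f :: "nat \<Rightarrow> 'a::comm_monoid_add" shows "(\<Sum>I<k + m. f I) = (\<Sum>I<k. f I) + (\<Sum>b<m. f (k + b))"
  by (induction m) (simp_all add: add.assoc)

lemma sum_pairs: fixes f :: "nat \<Rightarrow> 'a::comm_monoid_add" shows "(\<Sum>I<m * n. f I) = (\<Sum>a<m. \<Sum>b<n. f (a * n + b))"
proof (induction m)
  case 0 thus ?case by simp
next
  case (Suc m)
  have "(\<Sum>I<Suc m * n. f I) = (\<Sum>I<m * n + n. f I)" by (simp add: add.commute)
  also have "\<dots> = (\<Sum>I<m * n. f I) + (\<Sum>b<n. f (m * n + b))" by (rule sum_lessThan_add_nat)
  finally show ?case using Suc by simp
qed

lemma idx_bound: "a < m \<Longrightarrow> b < (n::nat) \<Longrightarrow> a * n + b < m * n"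
proof -
  assume "a < m" "b < n"
  hence "a * n + b < a * n + n" by simp
  also have "\<dots> = Suc a * n" by simp
  also have "\<dots> \<le> m * n" using \<open>a < m\<close> by (intro mult_right_mono) auto
  finally show ?thesis .
qed

lemma trace_onb:
  assumes on: "orthonormal n u" and X: "X \<in> carrier_mat n n"
  shows "(\<Sum>k<n. braket (u k) (X *\<^sub>v u k)) = mtrace X"
proof -
  have "(\<Sum>k<n. braket (u k) (X *\<^sub>v u k)) = (\<Sum>k<n. \<Sum>a<n. \<Sum>b<n. cnj (u k $ a) * X $$ (a, b) * u k $ b)"
    using braket_mult_vec[OF X orthonormalD(1)[OF on] orthonormalD(1)[OF on]] by simp
  also have "\<dots> = (\<Sum>a<n. \<Sum>k<n. \<Sum>b<n. cnj (u k $ a) * X $$ (a, b) * u k $ b)" by (rule sum.swap)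
  also have "\<dots> = (\<Sum>a<n. \<Sum>b<n. \<Sum>k<n. cnj (u k $ a) * X $$ (a, b) * u k $ b)"
    by (rule sum.cong[OF refl], rule sum.swap)
  also have "\<dots> = (\<Sum>a<n. \<Sum>b<n. X $$ (a, b) * (\<Sum>k<n. u k $ b * cnj (u k $ a)))"
    unfolding sum_distrib_left by (intro sum.cong refl) (simp add: mult_ac)
  also have "\<dots> = (\<Sum>a<n. \<Sum>b<n. X $$ (a, b) * (if b = a then 1 else 0))"
    using complete[OF on] by (intro sum.cong refl) simp
  also have "\<dots> = mtrace X" using X by (simp add: mtrace_def if_distrib cong: if_cong)
  finally show ?thesis .
qed

lemma trace_gproj_mult:
  assumes x: "u ` S \<subseteq> carrier_vec n" and X: "X \<in> carrier_mat n n"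
  shows "mtrace (gproj n c u S * X) = (\<Sum>k\<in>S. c k * braket (u k) (X *\<^sub>v u k))"
proof -
  have "mtrace (gproj n c u S * X) = (\<Sum>a<n. \<Sum>m<n. (\<Sum>k\<in>S. c k * (u k $ a * cnj (u k $ m))) * X $$ (m, a))"
    using X by (simp add: mtrace_def gproj_def scalar_prod_def atLeast0LessThan row_def col_def)
  also have "\<dots> = (\<Sum>a<n. \<Sum>m<n. \<Sum>k\<in>S. c k * (cnj (u k $ m) * X $$ (m, a) * u k $ a))"
    unfolding sum_distrib_right by (intro sum.cong refl) (simp add: mult_ac)
  also have "\<dots> = (\<Sum>a<n. \<Sum>k\<in>S. \<Sum>m<n. c k * (cnj (u k $ m) * X $$ (m, a) * u k $ a))"
    by (rule sum.cong[OF refl], rule sum.swap)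
  also have "\<dots> = (\<Sum>k\<in>S. \<Sum>a<n. \<Sum>m<n. c k * (cnj (u k $ m) * X $$ (m, a) * u k $ a))"
    by (rule sum.swap)
  also have "\<dots> = (\<Sum>k\<in>S. c k * (\<Sum>m<n. \<Sum>a<n. cnj (u k $ m) * X $$ (m, a) * u k $ a))"
    unfolding sum_distrib_left by (rule sum.cong[OF refl], rule sum.swap)
  also have "\<dots> = (\<Sum>k\<in>S. c k * braket (u k) (X *\<^sub>v u k))"
    using braket_mult_vec[OF X] x by (intro sum.cong refl) auto
  finally show ?thesis .
qed

lemma mtrace_kron:
  assumes A: "A \<in> carrier_mat m m" and B: "B \<in> carrier_mat n n" and n: "n > 0"
  shows "mtrace (kron A B) = mtrace A * mtrace B"
proof -
  have "mtrace (kron A B) = (\<Sum>I<m * n. A $$ (I div n, I div n) * B $$ (I mod n, I mod n))"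
    using A B by (simp add: mtrace_def kron_def)
  also have "\<dots> = (\<Sum>a<m. \<Sum>b<n. A $$ (a, a) * B $$ (b, b))"
    unfolding sum_pairs using n by (intro sum.cong refl) simp
  also have "\<dots> = mtrace A * mtrace B" using A B by (simp add: mtrace_def sum_product)
  finally show ?thesis .
qed

lemma ptrace_carrier: "dB > 0 \<Longrightarrow> X \<in> carrier_mat (dS * dB) (dS * dB) \<Longrightarrow> ptrace_B dB X \<in> carrier_mat dS dS"
  by (simp add: ptrace_B_def)

lemma ptrace_index: "dB > 0 \<Longrightarrow> X \<in> carrier_mat (dS * dB) (dS * dB) \<Longrightarrow> a < dS \<Longrightarrow> a' < dS \<Longrightarrow>
  ptrace_B dB X $$ (a, a') = (\<Sum>b<dB. X $$ (a * dB + b, a' * dB + b))"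
  by (simp add: ptrace_B_def)

lemma mtrace_ptrace:
  assumes dB: "dB > 0" and X: "X \<in> carrier_mat (dS * dB) (dS * dB)"
  shows "mtrace (ptrace_B dB X) = mtrace X"
proof -
  have "mtrace (ptrace_B dB X) = (\<Sum>a<dS. \<Sum>b<dB. X $$ (a * dB + b, a * dB + b))"
    using dB X by (simp add: mtrace_def ptrace_B_def)
  also have "\<dots> = mtrace X" using X by (simp add: mtrace_def sum_pairs)
  finally show ?thesis .
qed

lemma ptrace_gproj:
  assumes dB: "dB > 0"
  shows "ptrace_B dB (gproj (dS * dB) c x S) =
    gproj dS (\<lambda>(k, b). c k) (\<lambda>(k, b). vec dS (\<lambda>a. x k $ (a * dB + b))) (S \<times> {..<dB})"
proof (rule eq_matI)
  fix a a' assume "a < dim_row (gproj dS (\<lambda>(k, b). c k) (\<lambda>(k, b). vec dS (\<lambda>a. x k $ (a * dB + b))) (S \<times> {..<dB}))"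
    "a' < dim_col (gproj dS (\<lambda>(k, b). c k) (\<lambda>(k, b). vec dS (\<lambda>a. x k $ (a * dB + b))) (S \<times> {..<dB}))"
  hence a: "a < dS" "a' < dS" by auto
  have "ptrace_B dB (gproj (dS * dB) c x S) $$ (a, a') = (\<Sum>b<dB. \<Sum>k\<in>S. c k * (x k $ (a * dB + b) * cnj (x k $ (a' * dB + b))))"
    using dB a idx_bound[OF a(1)] idx_bound[OF a(2)] by (simp add: ptrace_B_def gproj_def)
  also have "\<dots> = (\<Sum>k\<in>S. \<Sum>b<dB. c k * (x k $ (a * dB + b) * cnj (x k $ (a' * dB + b))))" by (rule sum.swap)
  also have "\<dots> = (\<Sum>(k, b)\<in>S \<times> {..<dB}. c k * (x k $ (a * dB + b) * cnj (x k $ (a' * dB + b))))"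
    by (rule sum.cartesian_product)
  also have "\<dots> = gproj dS (\<lambda>(k, b). c k) (\<lambda>(k, b). vec dS (\<lambda>a. x k $ (a * dB + b))) (S \<times> {..<dB}) $$ (a, a')"
    using a by (simp add: gproj_def case_prod_beta)
  finally show "ptrace_B dB (gproj (dS * dB) c x S) $$ (a, a') = gproj dS (\<lambda>(k, b). c k) (\<lambda>(k, b). vec dS (\<lambda>a. x k $ (a * dB + b))) (S \<times> {..<dB}) $$ (a, a')" .
qed (use dB in \<open>auto simp: ptrace_B_def\<close>)

lemma kron_gproj:
  assumes dB: "dB > 0"
  shows "kron (gproj dS c1 x1 S1) (gproj dB c2 x2 S2) =
    gproj (dS * dB) (\<lambda>(i, k). c1 i * c2 k) (\<lambda>(i, k). vec (dS * dB) (\<lambda>I. x1 i $ (I div dB) * x2 k $ (I mod dB))) (S1 \<times> S2)"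
proof (rule eq_matI)
  fix I J assume "I < dim_row (gproj (dS * dB) (\<lambda>(i, k). c1 i * c2 k) (\<lambda>(i, k). vec (dS * dB) (\<lambda>I. x1 i $ (I div dB) * x2 k $ (I mod dB))) (S1 \<times> S2))"
    "J < dim_col (gproj (dS * dB) (\<lambda>(i, k). c1 i * c2 k) (\<lambda>(i, k). vec (dS * dB) (\<lambda>I. x1 i $ (I div dB) * x2 k $ (I mod dB))) (S1 \<times> S2))"
  hence IJ: "I < dS * dB" "J < dS * dB" by auto
  have d: "I div dB < dS" "J div dB < dS" using IJ by (simp_all add: less_mult_imp_div_less)
  have m: "I mod dB < dB" "J mod dB < dB" using dB by auto
  have "kron (gproj dS c1 x1 S1) (gproj dB c2 x2 S2) $$ (I, J)
     = (\<Sum>i\<in>S1. c1 i * (x1 i $ (I div dB) * cnj (x1 i $ (J div dB)))) * (\<Sum>k\<in>S2. c2 k * (x2 k $ (I mod dB) * cnj (x2 k $ (J mod dB))))"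
    using IJ d m by (simp add: kron_def gproj_def)
  also have "\<dots> = (\<Sum>i\<in>S1. \<Sum>k\<in>S2. c1 i * c2 k * ((x1 i $ (I div dB) * x2 k $ (I mod dB)) * cnj (x1 i $ (J div dB) * x2 k $ (J mod dB))))"
    unfolding sum_product by (intro sum.cong refl) (simp add: mult_ac)
  also have "\<dots> = (\<Sum>(i, k)\<in>S1 \<times> S2. c1 i * c2 k * ((x1 i $ (I div dB) * x2 k $ (I mod dB)) * cnj (x1 i $ (J div dB) * x2 k $ (J mod dB))))"
    by (rule sum.cartesian_product)
  also have "\<dots> = gproj (dS * dB) (\<lambda>(i, k). c1 i * c2 k) (\<lambda>(i, k). vec (dS * dB) (\<lambda>I. x1 i $ (I div dB) * x2 k $ (I mod dB))) (S1 \<times> S2) $$ (I, J)"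
    using IJ by (simp add: gproj_def case_prod_beta)
  finally show "kron (gproj dS c1 x1 S1) (gproj dB c2 x2 S2) $$ (I, J) = gproj (dS * dB) (\<lambda>(i, k). c1 i * c2 k) (\<lambda>(i, k). vec (dS * dB) (\<lambda>I. x1 i $ (I div dB) * x2 k $ (I mod dB))) (S1 \<times> S2) $$ (I, J)" .
qed (auto simp: kron_def)



lemma gproj_psd':
  assumes x: "x ` S \<subseteq> carrier_vec n" and c: "\<And>k. k \<in> S \<Longrightarrow> c k = of_real (r k)"
    and r: "\<And>k. k \<in> S \<Longrightarrow> r k \<ge> 0"
  shows "psd (gproj n c x S)"
proof -
  have "gproj n c x S = gproj n (\<lambda>k. of_real (r k)) x S"
    using c by (auto simp: gproj_def intro!: eq_matI sum.cong)
  thus ?thesis using gproj_psd[OF x r] by simp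
qed

lemma main_bound:
  fixes dS dB :: nat and \<rho>S \<rho>B :: "complex mat" and v :: "nat \<Rightarrow> complex vec" and M :: "nat set" and \<epsilon>1 :: real
  assumes dB: "dB > 0"
    and vc: "\<And>j. j < dS * dB \<Longrightarrow> v j \<in> carrier_vec (dS * dB)"
    and vo: "\<And>j k. j < dS * dB \<Longrightarrow> k < dS * dB \<Longrightarrow> braket (v j) (v k) = (if j = k then 1 else 0)"
    and rS: "density_op dS \<rho>S" and rB: "density_op dB \<rho>B"
    and M: "M \<subseteq> {..<dS * dB}" "M \<noteq> {}"
    and e1: "\<epsilon>1 > 0"
    and eth: "\<forall>j\<in>M. local_trace_dist dB (ketbra (v j)) (rho_mc (dS * dB) v M) < \<epsilon>1"
  shows "local_trace_dist dB (diag_ensemble (dS * dB) v (kron \<rho>S \<rho>B)) (rho_mc (dS * dB) v M)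
     \<le> \<epsilon>1 + Re (mtrace (wsum_proj (dS * dB) (\<lambda>_. 1) v ({..<dS * dB} - M) * kron \<rho>S \<rho>B))"
proof -
  define n where "n = dS * dB"
  have on: "orthonormal n v" unfolding orthonormal_def n_def using vc vo by auto
  have vimg: "v ` T \<subseteq> carrier_vec n" if "T \<subseteq> {..<n}" for T using that vc n_def by auto
  have vd: "j < n \<Longrightarrow> dim_vec (v j) = n" for j using vc n_def by auto
  define \<rho> where "\<rho> = kron \<rho>S \<rho>B"
  have \<rho>Sc: "\<rho>S \<in> carrier_mat dS dS" and pS: "psd \<rho>S" and tS: "mtrace \<rho>S = 1"
    using rS unfolding density_op_def by auto
  have \<rho>Bc: "\<rho>B \<in> carrier_mat dB dB" and pB: "psd \<rho>B" and tB: "mtrace \<rho>B = 1"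
    using rB unfolding density_op_def by auto
  have \<rho>c: "\<rho> \<in> carrier_mat n n" unfolding \<rho>_def n_def using \<rho>Sc \<rho>Bc by (simp add: kron_def)
  obtain a la where ona: "orthonormal dS a" and Sa: "\<rho>S = gproj dS (\<lambda>k. complex_of_real (la k)) a {..<dS}"
    and la: "\<forall>k<dS. la k \<ge> 0" by (rule psd_spectral[OF \<rho>Sc pS])
  obtain b mu where onb: "orthonormal dB b" and Bb: "\<rho>B = gproj dB (\<lambda>k. complex_of_real (mu k)) b {..<dB}"
    and mu: "\<forall>k<dB. mu k \<ge> 0" by (rule psd_spectral[OF \<rho>Bc pB])
  have \<rho>g: "\<rho> = gproj n (\<lambda>(i, k). complex_of_real (la i) * complex_of_real (mu k))
       (\<lambda>(i, k). vec n (\<lambda>I. a i $ (I div dB) * b k $ (I mod dB))) ({..<dS} \<times> {..<dB})"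
    unfolding \<rho>_def Sa Bb n_def by (rule kron_gproj[OF dB])
  have p\<rho>: "psd \<rho>" unfolding \<rho>g
    by (rule gproj_psd'[where r="\<lambda>(i, k). la i * mu k"]) (use la mu in auto)
  define p where "p j = braket (v j) (\<rho> *\<^sub>v v j)" for j
  define q where "q j = Re (p j)" for j
  have pq: "j < n \<Longrightarrow> p j = of_real (q j)" for j
    unfolding p_def q_def using psd_quad_real(1)[OF p\<rho> \<rho>c vc[folded n_def]] by simp
  have q0: "j < n \<Longrightarrow> q j \<ge> 0" for j
    unfolding q_def p_def using psd_quad_real(2)[OF p\<rho> \<rho>c vc[folded n_def]] by simp
  have "(\<Sum>j<n. p j) = mtrace \<rho>" unfolding p_def by (rule trace_onb[OF on \<rho>c])
  also have "\<dots> = 1" unfolding \<rho>_def using mtrace_kron[OF \<rho>Sc \<rho>Bc dB] tS tB by simp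
  finally have qsum: "(\<Sum>j<n. q j) = 1" unfolding q_def by (metis Re_sum one_complex.simps(1))
  have Pout: "Re (mtrace (wsum_proj n (\<lambda>_. 1) v ({..<n} - M) * \<rho>)) = (\<Sum>j\<in>{..<n} - M. q j)"
    unfolding wsum_proj_gproj trace_gproj_mult[OF vimg[OF Diff_subset] \<rho>c] q_def p_def by (simp add: Re_sum)
  define K where "K j = ketbra (v j)" for j
  define R where "R = rho_mc n v M"
  have Kg: "j < n \<Longrightarrow> K j = gproj n (\<lambda>_. 1) (\<lambda>_. v j) {j}" for j
    unfolding K_def using vd by (auto simp: ketbra_def gproj_def intro!: eq_matI)
  have Rg: "R = gproj n (\<lambda>_. complex_of_real (1 / real (card M))) v M"
    unfolding R_def rho_mc_def wsum_proj_gproj by simp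
  have finM: "finite M" using M(1) finite_subset by blast
  have cardM: "card M > 0" using finM M(2) by (simp add: card_gt_0_iff)
  define PK where "PK j = ptrace_B dB (K j)" for j
  define PR where "PR = ptrace_B dB R"
  have Kc: "j < n \<Longrightarrow> K j \<in> carrier_mat n n" for j using Kg by simp
  have Rc: "R \<in> carrier_mat n n" using Rg by simp
  have PKc: "j < n \<Longrightarrow> PK j \<in> carrier_mat dS dS" for j unfolding PK_def using Kc ptrace_carrier[OF dB] n_def by simp
  have PRc: "PR \<in> carrier_mat dS dS" unfolding PR_def using Rc ptrace_carrier[OF dB] n_def by simp
  have pPK: "j < n \<Longrightarrow> psd (PK j)" for j
  proof -
    assume j: "j < n"
    have "PK j = gproj dS (\<lambda>(k, b). 1) (\<lambda>(k, b). vec dS (\<lambda>a. v j $ (a * dB + b))) ({j} \<times> {..<dB})"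
      unfolding PK_def Kg[OF j] n_def using ptrace_gproj[OF dB, of dS "\<lambda>_. 1" "\<lambda>_. v j" "{j}"] by simp
    also have "psd \<dots>" by (rule gproj_psd'[where r="\<lambda>_. 1"]) auto
    finally show ?thesis .
  qed
  have pPR: "psd PR"
  proof -
    have "PR = gproj dS (\<lambda>(k, b). complex_of_real (1 / real (card M))) (\<lambda>(k, b). vec dS (\<lambda>a. v k $ (a * dB + b))) (M \<times> {..<dB})"
      unfolding PR_def Rg n_def by (rule ptrace_gproj[OF dB])
    also have "psd \<dots>" by (rule gproj_psd'[where r="\<lambda>_. 1 / real (card M)"]) auto
    finally show ?thesis .
  qed
  have hPK: "j < n \<Longrightarrow> hermitian (PK j)" for j using pPK unfolding psd_def by auto
  have hPR: "hermitian PR" using pPR unfolding psd_def by auto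
  have tPK: "j < n \<Longrightarrow> trace_norm (PK j) = 1" for j
  proof -
    assume j: "j < n"
    have "trace_norm (PK j) = Re (mtrace (PK j))" by (rule tn_psd[OF PKc[OF j] pPK[OF j]])
    also have "mtrace (PK j) = mtrace (K j)" unfolding PK_def using Kc[OF j] n_def by (intro mtrace_ptrace[OF dB]) simp
    also have "\<dots> = braket (v j) (v j)" unfolding Kg[OF j] using vc j n_def by (subst gproj_trace) auto
    also have "\<dots> = 1" using vo j n_def by simp
    finally show ?thesis by simp
  qed
  have tPR: "trace_norm PR = 1"
  proof -
    have "trace_norm PR = Re (mtrace PR)" by (rule tn_psd[OF PRc pPR])
    also have "mtrace PR = mtrace R" unfolding PR_def using Rc n_def by (intro mtrace_ptrace[OF dB]) simp
    also have "\<dots> = (\<Sum>k\<in>M. complex_of_real (1 / real (card M)) * braket (v k) (v k))"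
      unfolding Rg by (rule gproj_trace[OF vimg[OF M(1)[folded n_def]]])
    also have "\<dots> = (\<Sum>k\<in>M. complex_of_real (1 / real (card M)))"
      using vo M(1) by (intro sum.cong refl) auto
    also have "\<dots> = 1" using cardM by simp
    finally show ?thesis by simp
  qed
  define D where "D j = PK j - PR" for j
  have Dc: "j < n \<Longrightarrow> D j \<in> carrier_mat dS dS" for j unfolding D_def using PKc PRc unfolding carrier_mat_def by auto
  have Deq: "j < n \<Longrightarrow> D j = PK j + complex_of_real (-1) \<cdot>\<^sub>m PR" for j
    unfolding D_def using PKc PRc by (auto intro!: eq_matI)
  have hD: "j < n \<Longrightarrow> hermitian (D j)" for j
  proof -
    assume j: "j < n"
    have "hermitian (PK j + complex_of_real (-1) \<cdot>\<^sub>m PR)"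
      by (rule hermitian_add[OF PKc[OF j] _ hPK[OF j] hermitian_smult[OF PRc hPR]]) (use PRc in simp)
    thus ?thesis by (simp only: Deq[OF j])
  qed
  have tD: "j < n \<Longrightarrow> trace_norm (D j) \<le> 2" for j
  proof -
    assume j: "j < n"
    have "trace_norm (D j) \<le> trace_norm (PK j) + trace_norm (complex_of_real (-1) \<cdot>\<^sub>m PR)"
      unfolding Deq[OF j] using PRc by (intro tn_triangle[OF PKc[OF j] _ hPK[OF j] hermitian_smult[OF PRc hPR]]) simp
    also have "\<dots> = 2" using tPK[OF j] tPR tn_scale[OF PRc hPR, of "-1"] by simp
    finally show ?thesis .
  qed
  define \<omega> where "\<omega> = diag_ensemble n v \<rho>"
  have \<omega>g: "\<omega> = gproj n p v {..<n}" unfolding \<omega>_def diag_ensemble_def wsum_proj_gproj p_def by simp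
  have decomp: "ptrace_B dB \<omega> - PR = msum dS (\<lambda>j. complex_of_real (q j) \<cdot>\<^sub>m D j) {..<n}"
  proof (rule eq_matI)
    fix a a' assume "a < dim_row (msum dS (\<lambda>j. complex_of_real (q j) \<cdot>\<^sub>m D j) {..<n})"
      "a' < dim_col (msum dS (\<lambda>j. complex_of_real (q j) \<cdot>\<^sub>m D j) {..<n})"
    hence a: "a < dS" "a' < dS" by (auto simp: msum_def)
    have ib: "b < dB \<Longrightarrow> a * dB + b < n" "b < dB \<Longrightarrow> a' * dB + b < n" for b
      using idx_bound[OF a(1)] idx_bound[OF a(2)] n_def by auto
    have PKe: "j < n \<Longrightarrow> PK j $$ (a, a') = (\<Sum>b<dB. v j $ (a * dB + b) * cnj (v j $ (a' * dB + b)))" for j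
      unfolding PK_def using ptrace_index[OF dB Kc[unfolded n_def] a] ib Kg n_def
      by (simp add: gproj_def)
    have "(ptrace_B dB \<omega> - PR) $$ (a, a') = ptrace_B dB \<omega> $$ (a, a') - PR $$ (a, a')"
      using a PRc \<omega>g ptrace_carrier[OF dB, of \<omega> dS] n_def by simp
    also have "ptrace_B dB \<omega> $$ (a, a') = (\<Sum>b<dB. \<Sum>j<n. p j * (v j $ (a * dB + b) * cnj (v j $ (a' * dB + b))))"
      using ptrace_index[OF dB _ a, of \<omega>] \<omega>g n_def ib by (simp add: gproj_def)
    also have "\<dots> = (\<Sum>j<n. p j * PK j $$ (a, a'))"
      by (subst sum.swap) (simp add: PKe sum_distrib_left)
    also have "\<dots> = (\<Sum>j<n. complex_of_real (q j) * PK j $$ (a, a'))" using pq by simp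
    also have "PR $$ (a, a') = (\<Sum>j<n. complex_of_real (q j)) * PR $$ (a, a')"
      using qsum by (simp flip: of_real_sum)
    also have "(\<Sum>j<n. complex_of_real (q j) * PK j $$ (a, a')) - (\<Sum>j<n. complex_of_real (q j)) * PR $$ (a, a')
       = (\<Sum>j<n. complex_of_real (q j) * D j $$ (a, a'))"
      using PKc PRc a unfolding D_def by (simp add: sum_distrib_right sum_subtractf right_diff_distrib)
    also have "\<dots> = msum dS (\<lambda>j. complex_of_real (q j) \<cdot>\<^sub>m D j) {..<n} $$ (a, a')"
    proof -
      have "(\<Sum>j<n. complex_of_real (q j) * D j $$ (a, a')) = (\<Sum>j<n. (complex_of_real (q j) \<cdot>\<^sub>m D j) $$ (a, a'))"
      proof (rule sum.cong[OF refl])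
        fix j assume "j \<in> {..<n}"
        hence "dim_row (D j) = dS" "dim_col (D j) = dS" using Dc by auto
        thus "complex_of_real (q j) * D j $$ (a, a') = (complex_of_real (q j) \<cdot>\<^sub>m D j) $$ (a, a')" using a by simp
      qed
      thus ?thesis using a by (simp add: msum_def)
    qed
    finally show "(ptrace_B dB \<omega> - PR) $$ (a, a') = msum dS (\<lambda>j. complex_of_real (q j) \<cdot>\<^sub>m D j) {..<n} $$ (a, a')" .
  qed (use PRc in \<open>auto simp: msum_def\<close>)
  have "trace_norm (ptrace_B dB \<omega> - PR) \<le> (\<Sum>j<n. \<bar>q j\<bar> * trace_norm (D j))"
    unfolding decomp using tn_msum[of "{..<n}" D dS q] Dc hD by auto
  also have "\<dots> = (\<Sum>j<n. q j * trace_norm (D j))" using q0 by simp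
  also have "\<dots> = (\<Sum>j\<in>{..<n} - M. q j * trace_norm (D j)) + (\<Sum>j\<in>M. q j * trace_norm (D j))"
    using M(1) n_def by (intro sum.subset_diff) auto
  also have "\<dots> \<le> (\<Sum>j\<in>{..<n} - M. q j * 2) + (\<Sum>j\<in>M. q j * (2 * \<epsilon>1))"
  proof (intro add_mono sum_mono)
    fix j assume "j \<in> {..<n} - M"
    thus "q j * trace_norm (D j) \<le> q j * 2" using q0 tD by (intro mult_left_mono) auto
  next
    fix j assume j: "j \<in> M"
    hence jn: "j < n" using M(1) n_def by auto
    have "trace_norm (D j) = 2 * local_trace_dist dB (ketbra (v j)) (rho_mc (dS * dB) v M)"
      unfolding local_trace_dist_def D_def PK_def PR_def K_def R_def n_def by simp
    also have "\<dots> \<le> 2 * \<epsilon>1" using eth j by auto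
    finally show "q j * trace_norm (D j) \<le> q j * (2 * \<epsilon>1)" using q0[OF jn] by (intro mult_left_mono) auto
  qed
  also have "(\<Sum>j\<in>M. q j * (2 * \<epsilon>1)) \<le> 2 * \<epsilon>1"
  proof -
    have "(\<Sum>j\<in>M. q j) \<le> (\<Sum>j<n. q j)" using M(1) q0 n_def by (intro sum_mono2) auto
    hence "(\<Sum>j\<in>M. q j) \<le> 1" using qsum by simp
    hence "(\<Sum>j\<in>M. q j) * (2 * \<epsilon>1) \<le> 1 * (2 * \<epsilon>1)" using e1 by (intro mult_right_mono) auto
    thus ?thesis by (simp add: sum_distrib_right)
  qed
  finally have "trace_norm (ptrace_B dB \<omega> - PR) \<le> (\<Sum>j\<in>{..<n} - M. q j * 2) + 2 * \<epsilon>1"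
    by simp
  also have "(\<Sum>j\<in>{..<n} - M. q j * 2) = 2 * (\<Sum>j\<in>{..<n} - M. q j)"
    by (subst sum_distrib_right[symmetric]) simp
  finally have "trace_norm (ptrace_B dB \<omega> - PR) \<le> 2 * (\<Sum>j\<in>{..<n} - M. q j) + 2 * \<epsilon>1" .
  hence "trace_norm (ptrace_B dB \<omega> - PR) / 2 \<le> \<epsilon>1 + (\<Sum>j\<in>{..<n} - M. q j)" by simp
  thus ?thesis using Pout unfolding local_trace_dist_def \<omega>_def PR_def R_def n_def \<rho>_def by simp
qed


theorem lemma1:
  fixes dS :: nat and dB :: "nat \<Rightarrow> nat"
    and H \<rho>S \<rho>B :: "nat \<Rightarrow> complex mat"
    and E :: "nat \<Rightarrow> nat \<Rightarrow> real" and v :: "nat \<Rightarrow> nat \<Rightarrow> complex vec"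
    and u \<alpha> :: real and \<Delta> :: "nat \<Rightarrow> real"
  assumes dims: "dS > 0" "\<And>N. dB N > 0"
    and H_herm: "\<And>N. H N \<in> carrier_mat (dS * dB N) (dS * dB N) \<and> hermitian (H N)"
    and eig_vec: "\<And>N j. j < dS * dB N \<Longrightarrow> v N j \<in> carrier_vec (dS * dB N)"
    and eig: "\<And>N j. j < dS * dB N \<Longrightarrow> H N *\<^sub>v v N j = of_real (E N j) \<cdot>\<^sub>v v N j"
    and orthonormal: "\<And>N j k. j < dS * dB N \<Longrightarrow> k < dS * dB N \<Longrightarrow>
                         braket (v N j) (v N k) = (if j = k then 1 else 0)"
    and nondeg: "\<And>N. inj_on (E N) {..<dS * dB N}"
    and init: "\<And>N. density_op dS (\<rho>S N) \<and> density_op (dB N) (\<rho>B N)"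
    and alpha: "0 \<le> \<alpha>" "\<alpha> < 1"
    and Delta_pos: "\<And>N. \<Delta> N > 0"
    and Delta_growth: "\<Delta> \<in> O(\<lambda>N. real N powr \<alpha>)"
    and shell_ne: "\<And>N. shell (dS * dB N) (E N) (u * real N) (\<Delta> N) \<noteq> {}"
    and ETH: "\<And>\<epsilon>. \<epsilon> > 0 \<Longrightarrow> eventually (\<lambda>N. \<forall>j \<in> shell (dS * dB N) (E N) (u * real N) (\<Delta> N).
               local_trace_dist (dB N) (ketbra (v N j))
                 (rho_mc (dS * dB N) (v N) (shell (dS * dB N) (E N) (u * real N) (\<Delta> N))) < \<epsilon>)
             sequentially"
    and energy_dist: "\<And>\<epsilon>. \<epsilon> > 0 \<Longrightarrow> eventually (\<lambda>N.
               Re (mtrace (wsum_proj (dS * dB N) (\<lambda>_. 1) (v N)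
                     ({..<dS * dB N} - shell (dS * dB N) (E N) (u * real N) (\<Delta> N))
                   * kron (\<rho>S N) (\<rho>B N))) < \<epsilon>) sequentially"
  shows "\<And>\<epsilon>. \<epsilon> > 0 \<Longrightarrow> eventually (\<lambda>N.
           local_trace_dist (dB N) (diag_ensemble (dS * dB N) (v N) (kron (\<rho>S N) (\<rho>B N)))
             (rho_mc (dS * dB N) (v N) (shell (dS * dB N) (E N) (u * real N) (\<Delta> N))) < \<epsilon>)
         sequentially"
proof -
  fix \<epsilon> :: real assume e: "\<epsilon> > 0"
  have e2: "\<epsilon> / 2 > 0" using e by simp
  let ?M = "\<lambda>N. shell (dS * dB N) (E N) (u * real N) (\<Delta> N)"
  have ev: "eventually (\<lambda>N. (\<forall>j \<in> ?M N.
               local_trace_dist (dB N) (ketbra (v N j)) (rho_mc (dS * dB N) (v N) (?M N)) < \<epsilon> / 2) \<and>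
            Re (mtrace (wsum_proj (dS * dB N) (\<lambda>_. 1) (v N) ({..<dS * dB N} - ?M N)
                   * kron (\<rho>S N) (\<rho>B N))) < \<epsilon> / 2) sequentially"
    using ETH[OF e2] energy_dist[OF e2] by (rule eventually_conj)
  show "eventually (\<lambda>N.
           local_trace_dist (dB N) (diag_ensemble (dS * dB N) (v N) (kron (\<rho>S N) (\<rho>B N)))
             (rho_mc (dS * dB N) (v N) (?M N)) < \<epsilon>) sequentially"
  proof (rule eventually_mono[OF ev], elim conjE)
    fix N
    assume eth: "\<forall>j \<in> ?M N. local_trace_dist (dB N) (ketbra (v N j)) (rho_mc (dS * dB N) (v N) (?M N)) < \<epsilon> / 2"
      and en: "Re (mtrace (wsum_proj (dS * dB N) (\<lambda>_. 1) (v N) ({..<dS * dB N} - ?M N) * kron (\<rho>S N) (\<rho>B N))) < \<epsilon> / 2"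
    have Msub: "?M N \<subseteq> {..<dS * dB N}" unfolding shell_def by auto
    have "local_trace_dist (dB N) (diag_ensemble (dS * dB N) (v N) (kron (\<rho>S N) (\<rho>B N))) (rho_mc (dS * dB N) (v N) (?M N))
      \<le> \<epsilon> / 2 + Re (mtrace (wsum_proj (dS * dB N) (\<lambda>_. 1) (v N) ({..<dS * dB N} - ?M N) * kron (\<rho>S N) (\<rho>B N)))"
      by (rule main_bound[OF dims(2) eig_vec orthonormal _ _ Msub shell_ne e2 eth])
         (use init in auto)
    thus "local_trace_dist (dB N) (diag_ensemble (dS * dB N) (v N) (kron (\<rho>S N) (\<rho>B N))) (rho_mc (dS * dB N) (v N) (?M N)) < \<epsilon>"
      using en by simp
  qed
qed

end
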